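(* Let $\Omega\subset\mathbb{R}^n$ be a bounded domain with the uniform $C^1$-regularity property, $f\in L^3(\Omega)$, $S_b\in W^{1/3,3/2}(\partial\Omega)$, $\alpha,\beta\in L^\infty(\Omega)$ with $0<\underline{\alpha}\le\alpha\le\overline{\alpha}<\infty$, $0<\underline{\beta}\le\beta\le\overline{\beta}<\infty$ a.e., $V=W^3(\mathrm{div};\Omega)$, $Q=L^{3/2}(\Omega)$. For $\varepsilon>0$ let $(\mathbf{m}_\varepsilon,S_\varepsilon)\in V\times Q$ be the unique solution of $$\int_\Omega(\alpha+\beta|\mathbf{m}_\varepsilon|)(\mathbf{m}_\varepsilon\cdot\mathbf{v})\,d\mathbf{x}+\varepsilon\int_\Omega|\mathrm{div}\,\mathbf{m}_\varepsilon|\,\mathrm{div}\,\mathbf{m}_\varepsilon\,\mathrm{div}\,\mathbf{v}\,d\mathbf{x}-\int_\Omega\mathrm{div}(\mathbf{v})\,S_\varepsilon\,d\mathbf{x}=-\int_{\partial\Omega}S_b(\mathbf{v}\cdot\mathbf{n})\,d\sigma\quad\forall\mathbf{v}\in V,$$ $$\varepsilon\int_\Omega\frac{S_\varepsilon}{\sqrt{|S_\varepsilon|}}\,q\,d\mathbf{x}+\int_\Omega\mathrm{div}(\mathbf{m}_\varepsilon)\,q\,d\mathbf{x}=\int_\Omega f\,q\,d\mathbf{x}\quad\forall q\in Q.$$ Then there exist constants $\mathcal{K}_{\mathbf{m}},\mathcal{K}_S$, independent of $\varepsilon$, such that for all sufficiently small $\varepsilon>0$: $\|\mathbf{m}_\varepsilon\|_V\le\mathcal{K}_{\mathbf{m}}$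 and $\|S_\varepsilon\|_Q\le\mathcal{K}_S$.
   Context: $W^3(\mathrm{div};\Omega):=\{\mathbf{v}\in(L^3(\Omega))^n:\mathrm{div}(\mathbf{v})\in L^3(\Omega)\}$ with norm $\|\mathbf{v}\|_V=(\|\mathbf{v}\|_{L^3}^3+\|\mathrm{div}\,\mathbf{v}\|_{L^3}^3)^{1/3}$; $\|\cdot\|_Q$ is the $L^{3/2}$ norm. The normal trace $\mathbf{v}\cdot\mathbf{n}$ lies in $(W^{1/3,3/2}(\partial\Omega))'$ and the boundary integral denotes the duality pairing. $p/\sqrt{|p|}:=0$ where $p=0$. *)

theory Defs
  imports "HOL-Analysis.Analysis"
begin

definition Lp :: "real \<Rightarrow> (real^'n) set \<Rightarrow> (real^'n \<Rightarrow> 'b::real_normed_vector) \<Rightarrow> bool" where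
  "Lp p \<Omega> f \<longleftrightarrow> f \<in> borel_measurable (lebesgue_on \<Omega>) \<and>
     integrable (lebesgue_on \<Omega>) (\<lambda>x. norm (f x) powr p)"

definition Lp_norm :: "real \<Rightarrow> (real^'n) set \<Rightarrow> (real^'n \<Rightarrow> 'b::real_normed_vector) \<Rightarrow> real" where
  "Lp_norm p \<Omega> f = (integral\<^sup>L (lebesgue_on \<Omega>) (\<lambda>x. norm (f x) powr p)) powr (1 / p)"

text \<open>Norm of W^3(div): (||v||_3^3 + ||div v||_3^3)^(1/3), with dv the weak divergence of v.\<close>
definition V_norm :: "(real^'n) set \<Rightarrow> (real^'n \<Rightarrow> real^'n) \<Rightarrow> (real^'n \<Rightarrow> real) \<Rightarrow> real" where
  "V_norm \<Omega> v dv = (integral\<^sup>L (lebesgue_on \<Omega>) (\<lambda>x. norm (v x) powr 3)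
                    + integral\<^sup>L (lebesgue_on \<Omega>) (\<lambda>x. \<bar>dv x\<bar> powr 3)) powr (1/3)"

definition test_fun :: "(real^'n) set \<Rightarrow> (real^'n \<Rightarrow> real) \<Rightarrow> (real^'n \<Rightarrow> real^'n) \<Rightarrow> bool" where
  "test_fun \<Omega> \<phi> g \<longleftrightarrow> (\<forall>x. (\<phi> has_derivative (\<lambda>h. g x \<bullet> h)) (at x)) \<and> continuous_on UNIV g \<and>
     compact (closure {x. \<phi> x \<noteq> 0}) \<and> closure {x. \<phi> x \<noteq> 0} \<subseteq> \<Omega>"

definition weak_div :: "(real^'n) set \<Rightarrow> (real^'n \<Rightarrow> real^'n) \<Rightarrow> (real^'n \<Rightarrow> real) \<Rightarrow> bool" where
  "weak_div \<Omega> v d \<longleftrightarrow> (\<forall>\<phi> g. test_fun \<Omega> \<phi> g \<longrightarrow>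
     integral\<^sup>L (lebesgue_on \<Omega>) (\<lambda>x. v x \<bullet> g x) = - integral\<^sup>L (lebesgue_on \<Omega>) (\<lambda>x. d x * \<phi> x))"

definition weak_grad :: "(real^'n) set \<Rightarrow> (real^'n \<Rightarrow> real) \<Rightarrow> (real^'n \<Rightarrow> real^'n) \<Rightarrow> bool" where
  "weak_grad \<Omega> u G \<longleftrightarrow> (\<forall>\<phi> g. test_fun \<Omega> \<phi> g \<longrightarrow> (\<forall>k.
     integral\<^sup>L (lebesgue_on \<Omega>) (\<lambda>x. u x * g x $ k) = - integral\<^sup>L (lebesgue_on \<Omega>) (\<lambda>x. G x $ k * \<phi> x)))"

text \<open>Duality pairing  int_{bdry Omega} S_b (v.n) d sigma, where S_b is the trace of
  Sext in W^{1,3/2}(Omega) with weak gradient gSext (Green's formula).\<close>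
definition bdry_pair :: "(real^'n) set \<Rightarrow> (real^'n \<Rightarrow> real) \<Rightarrow> (real^'n \<Rightarrow> real^'n)
     \<Rightarrow> (real^'n \<Rightarrow> real^'n) \<Rightarrow> (real^'n \<Rightarrow> real) \<Rightarrow> real" where
  "bdry_pair \<Omega> Sext gSext v dv =
     integral\<^sup>L (lebesgue_on \<Omega>) (\<lambda>x. v x \<bullet> gSext x + dv x * Sext x)"

definition sgn_sqrt :: "real \<Rightarrow> real" where
  "sgn_sqrt p = (if p = 0 then 0 else p / sqrt \<bar>p\<bar>)"

text \<open>Uniform C^1-regularity property (Adams, Sobolev Spaces, 4.10) with m = 1.\<close>
definition unif_C1 :: "(real^'n) set \<Rightarrow> bool" where
  "unif_C1 \<Omega> \<longleftrightarrow> (\<exists>(J::nat set) (U::nat \<Rightarrow> (real^'n) set) (\<Phi>::nat \<Rightarrow> real^'n \<Rightarrow> real^'n)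
       (\<Psi>::nat \<Rightarrow> real^'n \<Rightarrow> real^'n) D\<Phi> D\<Psi> (k0::'n) (\<delta>::real) (M::real) (R::nat).
     (\<forall>j\<in>J. open (U j)) \<and> frontier \<Omega> \<subseteq> (\<Union>j\<in>J. U j) \<and>
     (\<forall>x. \<exists>N. open N \<and> x \<in> N \<and> finite {j\<in>J. U j \<inter> N \<noteq> {}}) \<and>
     (\<forall>j\<in>J. \<Phi> j ` U j = ball 0 1 \<and> \<Psi> j ` ball 0 1 = U j \<and>
        (\<forall>x\<in>U j. \<Psi> j (\<Phi> j x) = x) \<and> (\<forall>y\<in>ball 0 1. \<Phi> j (\<Psi> j y) = y)) \<and>
     (\<forall>j\<in>J. (\<forall>x\<in>U j. (\<Phi> j has_derivative D\<Phi> j x) (at x)) \<and>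
        (\<forall>k. continuous_on (U j) (\<lambda>x. D\<Phi> j x (axis k 1))) \<and>
        (\<forall>y\<in>ball 0 1. (\<Psi> j has_derivative D\<Psi> j y) (at y)) \<and>
        (\<forall>k. continuous_on (ball 0 1) (\<lambda>y. D\<Psi> j y (axis k 1)))) \<and>
     0 < \<delta> \<and> {x\<in>\<Omega>. infdist x (frontier \<Omega>) < \<delta>} \<subseteq> (\<Union>j\<in>J. \<Psi> j ` ball 0 (1/2)) \<and>
     (\<forall>j\<in>J. \<Phi> j ` (U j \<inter> \<Omega>) = {y\<in>ball 0 1. 0 < y $ k0}) \<and>
     (\<forall>j\<in>J. \<forall>i. (\<forall>x\<in>U j. \<bar>\<Phi> j x $ i\<bar> \<le> M \<and> (\<forall>k. \<bar>D\<Phi> j x (axis k 1) $ i\<bar> \<le> M)) \<and>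
        (\<forall>y\<in>ball 0 1. \<bar>\<Psi> j y $ i\<bar> \<le> M \<and> (\<forall>k. \<bar>D\<Psi> j y (axis k 1) $ i\<bar> \<le> M))) \<and>
     (\<forall>F\<subseteq>J. card F = R + 1 \<longrightarrow> (\<Inter>j\<in>F. U j) = {}))"

end

theory Submission
  imports Defs
begin

lemma young3: fixes a b :: real assumes "0 \<le> a" "0 \<le> b"
  shows "a * b \<le> a powr 3 / 3 + 2 * b powr (3/2) / 3"
  using Youngs_inequality[of 3 "3/2" a b] assms by simp

lemma holder3_int:
  fixes u w :: "'a \<Rightarrow> real"
  assumes u: "u \<in> borel_measurable M" and w: "w \<in> borel_measurable M"
    and iu: "integrable M (\<lambda>x. \<bar>u x\<bar> powr 3)" and iw: "integrable M (\<lambda>x. \<bar>w x\<bar> powr (3/2))"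
  shows "integrable M (\<lambda>x. u x * w x)"
proof (rule Bochner_Integration.integrable_bound)
  show "integrable M (\<lambda>x. \<bar>u x\<bar> powr 3 / 3 + 2 * \<bar>w x\<bar> powr (3/2) / 3)"
    using iu iw by auto
  show "(\<lambda>x. u x * w x) \<in> borel_measurable M" using u w by auto
  show "AE x in M. norm (u x * w x) \<le> norm (\<bar>u x\<bar> powr 3 / 3 + 2 * \<bar>w x\<bar> powr (3/2) / 3)"
    using young3[of "\<bar>u _\<bar>" "\<bar>w _\<bar>"] by (auto simp: abs_mult)
qed

lemma holder3:
  fixes u w :: "'a \<Rightarrow> real"
  assumes u: "u \<in> borel_measurable M" and w: "w \<in> borel_measurable M"
    and iu: "integrable M (\<lambda>x. \<bar>u x\<bar> powr 3)" and iw: "integrable M (\<lambda>x. \<bar>w x\<bar> powr (3/2))"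
  shows "(\<integral>x. \<bar>u x * w x\<bar> \<partial>M) \<le> (\<integral>x. \<bar>u x\<bar> powr 3 \<partial>M) powr (1/3) * (\<integral>x. \<bar>w x\<bar> powr (3/2) \<partial>M) powr (2/3)"
proof -
  define A where "A = (\<integral>x. \<bar>u x\<bar> powr 3 \<partial>M)"
  define B where "B = (\<integral>x. \<bar>w x\<bar> powr (3/2) \<partial>M)"
  have A0: "A \<ge> 0" "B \<ge> 0" unfolding A_def B_def by auto
  have iuw: "integrable M (\<lambda>x. \<bar>u x * w x\<bar>)" using holder3_int[OF assms] by auto
  show ?thesis
  proof (cases "A = 0 \<or> B = 0")
    case True
    then have "AE x in M. u x * w x = 0"
    proof
      assume "A = 0"
      then have "AE x in M. \<bar>u x\<bar> powr 3 = 0" unfolding A_def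
        using integral_nonneg_eq_0_iff_AE[OF iu] by auto
      then show ?thesis by eventually_elim auto
    next
      assume "B = 0"
      then have "AE x in M. \<bar>w x\<bar> powr (3/2) = 0" unfolding B_def
        using integral_nonneg_eq_0_iff_AE[OF iw] by auto
      then show ?thesis by eventually_elim auto
    qed
    then have "(\<integral>x. \<bar>u x * w x\<bar> \<partial>M) = (\<integral>x. 0 \<partial>M)"
      using borel_measurable_integrable[OF iuw] by (intro integral_cong_AE) (auto elim: eventually_mono)
    then show ?thesis by (simp add: A_def[symmetric] B_def[symmetric])
  next
    case False
    then have Ap: "A > 0" "B > 0" using A0 by auto
    define a where "a = A powr (1/3)"
    define b where "b = B powr (2/3)"
    have ap: "a > 0" "b > 0" using Ap by (auto simp: a_def b_def)
    have a3: "a powr 3 = A" using Ap by (simp add: a_def powr_powr)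
    have b3: "b powr (3/2) = B" using Ap by (simp add: b_def powr_powr)
    have pw: "\<bar>u x * w x\<bar> \<le> a * b * (\<bar>u x\<bar> powr 3 / (3 * A) + 2 * \<bar>w x\<bar> powr (3/2) / (3 * B))" for x
    proof -
      have "(\<bar>u x\<bar> / a) * (\<bar>w x\<bar> / b) \<le> (\<bar>u x\<bar> / a) powr 3 / 3 + 2 * (\<bar>w x\<bar> / b) powr (3/2) / 3"
        by (rule young3) (use ap in auto)
      also have "\<dots> = \<bar>u x\<bar> powr 3 / (3 * A) + 2 * \<bar>w x\<bar> powr (3/2) / (3 * B)"
        using ap by (simp add: powr_divide a3 b3)
      finally have "(\<bar>u x\<bar> / a) * (\<bar>w x\<bar> / b) \<le> \<bar>u x\<bar> powr 3 / (3 * A) + 2 * \<bar>w x\<bar> powr (3/2) / (3 * B)" .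
      then have "a * b * ((\<bar>u x\<bar> / a) * (\<bar>w x\<bar> / b)) \<le> a * b * (\<bar>u x\<bar> powr 3 / (3 * A) + 2 * \<bar>w x\<bar> powr (3/2) / (3 * B))"
        using ap by (intro mult_left_mono) auto
      then show ?thesis using ap by (simp add: abs_mult)
    qed
    have "(\<integral>x. \<bar>u x * w x\<bar> \<partial>M) \<le> (\<integral>x. a * b * (\<bar>u x\<bar> powr 3 / (3 * A) + 2 * \<bar>w x\<bar> powr (3/2) / (3 * B)) \<partial>M)"
      using iuw iu iw pw by (intro integral_mono) auto
    also have "\<dots> = a * b * ((\<integral>x. \<bar>u x\<bar> powr 3 \<partial>M) / (3 * A) + 2 * (\<integral>x. \<bar>w x\<bar> powr (3/2) \<partial>M) / (3 * B))"
      using iu iw by simp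
    also have "\<dots> = a * b" using Ap unfolding A_def B_def by (simp del: powr_numeral)
    finally show ?thesis by (simp add: a_def b_def A_def B_def)
  qed
qed

definition IK :: "'n::finite \<Rightarrow> (real^'n) set" where "IK k = Basis - {axis k 1}"
definition PK :: "'n::finite \<Rightarrow> (real^'n \<Rightarrow> real) measure" where
  "PK k = (\<Pi>\<^sub>M b\<in>IK k. (lborel::real measure))"
definition TK :: "'n::finite \<Rightarrow> (real^'n \<Rightarrow> real) \<times> real \<Rightarrow> real^'n" where
  "TK k = (\<lambda>(x,t). (\<Sum>b\<in>IK k. x b *\<^sub>R b) + t *\<^sub>R axis k 1)"

lemma LP: "product_sigma_finite (\<lambda>_. lborel :: real measure)"
  by standard

lemma finite_IK[simp]: "finite (IK k)" by (simp add: IK_def)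

lemma PK_sf: "sigma_finite_measure (PK k)"
  unfolding PK_def by (rule product_sigma_finite.sigma_finite[OF LP]) simp

lemma PKL: "pair_sigma_finite (PK k) (lborel::real measure)"
  unfolding pair_sigma_finite_def using PK_sf by (auto intro: lborel.sigma_finite_measure_axioms)

lemma TK_meas[measurable]: "TK k \<in> borel_measurable (PK k \<Otimes>\<^sub>M lborel)"
  unfolding TK_def PK_def by measurable

lemma TK_k: "TK k (x,t) $ k = t"
proof -
  have "(\<Sum>b\<in>IK k. x b *\<^sub>R b) $ k = (\<Sum>b\<in>IK k. x b * (b $ k))"
    by (simp add: sum_component)
  also have "\<dots> = 0"
    by (rule sum.neutral) (auto simp: IK_def Basis_vec_def axis_def split: if_splits)
  finally show ?thesis by (simp add: TK_def axis_def)
qed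

lemma TK_shift: "TK k (x,t) + s *\<^sub>R axis k 1 = TK k (x, t + s)"
  by (simp add: TK_def algebra_simps)

lemma Basis_insert: "Basis = insert (axis k 1) (IK (k::'n::finite))"
  by (auto simp: IK_def Basis_vec_def)

lemma nn_lborel_TK:
  fixes h :: "real^'n::finite \<Rightarrow> ennreal"
  assumes h[measurable]: "h \<in> borel_measurable borel"
  shows "(\<integral>\<^sup>+ z. h z \<partial>lborel) = (\<integral>\<^sup>+ x. (\<integral>\<^sup>+ t. h (TK k (x,t)) \<partial>lborel) \<partial>PK k)"
proof -
  interpret LP: product_sigma_finite "\<lambda>_. lborel :: real measure" by (rule LP)
  have "(\<integral>\<^sup>+ z. h z \<partial>lborel) = (\<integral>\<^sup>+ f. h (\<Sum>b\<in>Basis. f b *\<^sub>R b) \<partial>(\<Pi>\<^sub>M b\<in>Basis. lborel))"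
    by (subst lborel_eq) (simp add: nn_integral_distr)
  also have "\<dots> = (\<integral>\<^sup>+ f. h (\<Sum>b\<in>Basis. f b *\<^sub>R b) \<partial>(\<Pi>\<^sub>M b\<in>insert (axis k 1) (IK k). lborel))"
    by (simp add: Basis_insert[of k, symmetric])
  also have "\<dots> = (\<integral>\<^sup>+ x. (\<integral>\<^sup>+ t. h (\<Sum>b\<in>Basis. (x(axis k 1 := t)) b *\<^sub>R b) \<partial>lborel) \<partial>PK k)"
    unfolding PK_def
    by (subst LP.product_nn_integral_insert) (auto simp: IK_def Basis_insert[of k, symmetric])
  also have "\<dots> = (\<integral>\<^sup>+ x. (\<integral>\<^sup>+ t. h (TK k (x,t)) \<partial>lborel) \<partial>PK k)"
  proof -
    have "(\<Sum>b\<in>Basis. (x(axis k 1 := t)) b *\<^sub>R b) = TK k (x,t)" for x t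
    proof -
      have nI: "axis k 1 \<notin> IK k" by (simp add: IK_def)
      have "(\<Sum>b\<in>Basis. (x(axis k 1 := t)) b *\<^sub>R b) = (\<Sum>b\<in>insert (axis k 1) (IK k). (x(axis k 1 := t)) b *\<^sub>R b)"
        by (simp add: Basis_insert[of k, symmetric])
      also have "\<dots> = t *\<^sub>R axis k 1 + (\<Sum>b\<in>IK k. (x(axis k 1 := t)) b *\<^sub>R b)"
        using nI by (simp add: sum.insert)
      also have "(\<Sum>b\<in>IK k. (x(axis k 1 := t)) b *\<^sub>R b) = (\<Sum>b\<in>IK k. x b *\<^sub>R b)"
        using nI by (intro sum.cong) auto
      finally show ?thesis by (simp add: TK_def)
    qed
    then show ?thesis by simp
  qed
  finally show ?thesis .
qed

lemma lborel_TK: "(lborel :: (real^'n::finite) measure) = distr (PK k \<Otimes>\<^sub>M lborel) borel (TK k)"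
proof (rule measure_eqI)
  show "sets lborel = sets (distr (PK k \<Otimes>\<^sub>M lborel) borel (TK k))" by simp
  fix A :: "(real^'n) set" assume A: "A \<in> sets lborel"
  interpret Q: pair_sigma_finite "PK k" "lborel::real measure" by (rule PKL)
  have "emeasure lborel A = (\<integral>\<^sup>+ z. indicator A z \<partial>lborel)" using A by simp
  also have "\<dots> = (\<integral>\<^sup>+ x. (\<integral>\<^sup>+ t. indicator A (TK k (x,t)) \<partial>lborel) \<partial>PK k)"
    using A by (intro nn_lborel_TK) simp
  also have "\<dots> = (\<integral>\<^sup>+ p. indicator A (TK k p) \<partial>(PK k \<Otimes>\<^sub>M lborel))"
    using A by (subst lborel.nn_integral_fst[symmetric]) auto
  also have "\<dots> = (\<integral>\<^sup>+ z. indicator A z \<partial>distr (PK k \<Otimes>\<^sub>M lborel) borel (TK k))"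
    using A by (subst nn_integral_distr) auto
  also have "\<dots> = emeasure (distr (PK k \<Otimes>\<^sub>M lborel) borel (TK k)) A"
    using A by (subst nn_integral_indicator) auto
  finally show "emeasure lborel A = emeasure (distr (PK k \<Otimes>\<^sub>M lborel) borel (TK k)) A" .
qed


lemma integrable_TK:
  fixes h :: "real^'n::finite \<Rightarrow> 'b::{banach, second_countable_topology}"
  assumes "h \<in> borel_measurable borel"
  shows "integrable lborel h \<longleftrightarrow> integrable (PK k \<Otimes>\<^sub>M lborel) (\<lambda>p. h (TK k p))"
  using assms by (subst lborel_TK[of k]) (simp add: integrable_distr_eq)

lemma integral_TK:
  fixes h :: "real^'n::finite \<Rightarrow> 'b::{banach, second_countable_topology}"
  assumes hm: "h \<in> borel_measurable borel" and hi: "integrable lborel h"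
  shows "integral\<^sup>L lborel h = (\<integral>x. (\<integral>t. h (TK k (x,t)) \<partial>lborel) \<partial>PK k)"
proof -
  interpret Q: pair_sigma_finite "PK k" "lborel::real measure" by (rule PKL)
  have i2: "integrable (PK k \<Otimes>\<^sub>M lborel) (\<lambda>p. h (TK k p))" using integrable_TK hm hi by blast
  have "integral\<^sup>L lborel h = integral\<^sup>L (PK k \<Otimes>\<^sub>M lborel) (\<lambda>p. h (TK k p))"
    using hm by (subst lborel_TK[of k]) (simp add: integral_distr)
  also have "\<dots> = (\<integral>x. (\<integral>t. h (TK k (x,t)) \<partial>lborel) \<partial>PK k)"
    using Q.integral_fst'[OF i2] by simp
  finally show ?thesis .
qed

lemma AE_TK:
  fixes h :: "real^'n::finite \<Rightarrow> 'b::{banach, second_countable_topology}"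
  assumes hm: "h \<in> borel_measurable borel" and hi: "integrable lborel h"
  shows "AE x in PK k. integrable lborel (\<lambda>t. h (TK k (x,t)))"
proof -
  interpret Q: pair_sigma_finite "PK k" "lborel::real measure" by (rule PKL)
  have i2: "integrable (PK k \<Otimes>\<^sub>M lborel) (\<lambda>p. h (TK k p))" using integrable_TK hm hi by blast
  show ?thesis using Q.AE_integrable_fst'[OF i2] by simp
qed

lemma ind_int: "integrable lborel (indicator {a..b::real} :: real \<Rightarrow> real)"
  by (rule integrable_real_indicator) (auto simp: emeasure_lborel_Icc_eq)

lemma line_ftc:
  fixes \<psi> \<psi>' :: "real \<Rightarrow> real"
  assumes d: "\<And>s. (\<psi> has_real_derivative \<psi>' s) (at s)"
    and c: "continuous_on UNIV \<psi>'"
    and sup: "\<And>s. s > B \<Longrightarrow> \<psi> s = 0 \<and> \<psi>' s = 0"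
  shows "(\<integral>s. (if t \<le> s then \<psi>' s else 0) \<partial>lborel) = - \<psi> t"
proof -
  define b where "b = max t B + 1"
  have tb: "t \<le> b" "b > B" by (auto simp: b_def)
  have eq: "(\<lambda>s. if t \<le> s then \<psi>' s else 0) = (\<lambda>s. indicator {t..b} s *\<^sub>R \<psi>' s)"
  proof
    fix s show "(if t \<le> s then \<psi>' s else 0) = indicator {t..b} s *\<^sub>R \<psi>' s"
      using sup[of s] tb by (cases "s \<le> b") (auto simp: indicator_def)
  qed
  have "integral\<^sup>L lborel (\<lambda>s. indicator {t..b} s *\<^sub>R \<psi>' s) = \<psi> b - \<psi> t"
  proof (rule integral_FTC_atLeastAtMost[OF tb(1)])
    show "(\<psi> has_vector_derivative \<psi>' x) (at x within {t..b})" for x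
      using d[of x] by (auto simp: has_real_derivative_iff_has_vector_derivative intro: has_vector_derivative_at_within)
    show "continuous_on {t..b} \<psi>'" using c by (rule continuous_on_subset) auto
  qed
  then show ?thesis using eq sup[of b] tb by simp
qed

lemma line_ibp:
  fixes h \<psi> \<psi>' :: "real \<Rightarrow> real"
  assumes hm[measurable]: "h \<in> borel_measurable borel" and hi: "integrable lborel h"
    and d: "\<And>s. (\<psi> has_real_derivative \<psi>' s) (at s)"
    and c: "continuous_on UNIV \<psi>'"
    and sup: "\<And>s. \<bar>s\<bar> > B \<Longrightarrow> \<psi> s = 0 \<and> \<psi>' s = 0"
    and bd: "\<And>s. \<bar>\<psi>' s\<bar> \<le> C"
  shows "(\<integral>s. (\<integral>t. (if t \<le> s then h t else 0) \<partial>lborel) * \<psi>' s \<partial>lborel) = - (\<integral>t. h t * \<psi> t \<partial>lborel)"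
proof -
  interpret Q: pair_sigma_finite "lborel::real measure" "lborel::real measure" ..
  have pm[measurable]: "\<psi>' \<in> borel_measurable borel"
    using c by (intro borel_measurable_continuous_onI) simp
  have psi_int: "integrable lborel \<psi>'"
  proof (rule Bochner_Integration.integrable_bound)
    show "integrable lborel (\<lambda>s. C * indicator {-B..B} s)" using ind_int by simp
    show "AE s in lborel. norm (\<psi>' s) \<le> norm (C * indicator {-B..B} s :: real)"
    proof (rule AE_I2)
      fix s show "norm (\<psi>' s) \<le> norm (C * indicator {-B..B} s :: real)"
      proof (cases "\<bar>s\<bar> \<le> B")
        case True then have "s \<in> {-B..B}" by auto
        then show ?thesis using bd[of s] by simp
      next
        case False then show ?thesis using sup[of s] by simp
      qed
    qed
  qed simp
  define F where "F t s = (if t \<le> s then h t else 0) * \<psi>' s" for t s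
  have Fm[measurable]: "case_prod F \<in> borel_measurable (lborel \<Otimes>\<^sub>M lborel)"
    unfolding F_def by measurable
  define Cp where "Cp = (\<integral>s. \<bar>\<psi>' s\<bar> \<partial>lborel)"
  have psi_abs: "integrable lborel (\<lambda>s. \<bar>\<psi>' s\<bar>)" using integrable_abs[OF psi_int] by simp
  have Ft_int: "integrable lborel (\<lambda>s. F t s)" for t
  proof (rule Bochner_Integration.integrable_bound[where f="\<lambda>s. \<bar>h t\<bar> * \<bar>\<psi>' s\<bar>"])
    show "integrable lborel (\<lambda>s. \<bar>h t\<bar> * \<bar>\<psi>' s\<bar>)" using psi_abs by (rule integrable_mult_right)
    show "(\<lambda>s. F t s) \<in> borel_measurable lborel" unfolding F_def by measurable
    show "AE s in lborel. norm (F t s) \<le> norm (\<bar>h t\<bar> * \<bar>\<psi>' s\<bar>)"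
      by (rule AE_I2) (simp add: F_def abs_mult)
  qed
  have Fi: "integrable (lborel \<Otimes>\<^sub>M lborel) (case_prod F)"
  proof (rule lborel_pair.Fubini_integrable)
    show "case_prod F \<in> borel_measurable (lborel \<Otimes>\<^sub>M lborel)" by (rule Fm)
    show "AE t in lborel. integrable lborel (\<lambda>s. case_prod F (t, s))"
      using Ft_int by simp
    show "integrable lborel (\<lambda>t. \<integral>s. norm (case_prod F (t, s)) \<partial>lborel)"
    proof (rule Bochner_Integration.integrable_bound[where f="\<lambda>t. \<bar>h t\<bar> * Cp"])
      show "integrable lborel (\<lambda>t. \<bar>h t\<bar> * Cp)" using integrable_abs[OF hi] by (rule integrable_mult_left)
      show "(\<lambda>t. \<integral>s. norm (case_prod F (t, s)) \<partial>lborel) \<in> borel_measurable lborel"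
        by measurable
      show "AE t in lborel. norm (\<integral>s. norm (case_prod F (t, s)) \<partial>lborel) \<le> norm (\<bar>h t\<bar> * Cp)"
      proof (rule AE_I2)
        fix t
        have "(\<integral>s. norm (F t s) \<partial>lborel) \<le> (\<integral>s. \<bar>h t\<bar> * \<bar>\<psi>' s\<bar> \<partial>lborel)"
        proof (rule integral_mono)
          show "integrable lborel (\<lambda>s. norm (F t s))" by (rule integrable_norm[OF Ft_int])
          show "integrable lborel (\<lambda>s. \<bar>h t\<bar> * \<bar>\<psi>' s\<bar>)" using psi_abs by (rule integrable_mult_right)
          show "norm (F t s) \<le> \<bar>h t\<bar> * \<bar>\<psi>' s\<bar>" for s by (simp add: F_def abs_mult)
        qed
        also have "\<dots> = \<bar>h t\<bar> * Cp" by (simp add: Cp_def)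
        finally have "(\<integral>s. norm (F t s) \<partial>lborel) \<le> \<bar>h t\<bar> * Cp" .
        moreover have "(\<integral>s. norm (F t s) \<partial>lborel) \<ge> 0" by (rule integral_nonneg_AE) simp
        moreover have "Cp \<ge> 0" unfolding Cp_def by (rule integral_nonneg_AE) simp
        ultimately show "norm (\<integral>s. norm (case_prod F (t, s)) \<partial>lborel) \<le> norm (\<bar>h t\<bar> * Cp)"
          by simp
      qed
    qed
  qed
  have "(\<integral>s. (\<integral>t. F t s \<partial>lborel) \<partial>lborel) = (\<integral>t. (\<integral>s. F t s \<partial>lborel) \<partial>lborel)"
    by (rule lborel_pair.Fubini_integral[OF Fi])
  moreover have "(\<integral>t. F t s \<partial>lborel) = (\<integral>t. (if t \<le> s then h t else 0) \<partial>lborel) * \<psi>' s" for s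
    by (simp add: F_def)
  moreover have "(\<integral>s. F t s \<partial>lborel) = h t * (- \<psi> t)" for t
  proof -
    have "(\<integral>s. F t s \<partial>lborel) = h t * (\<integral>s. (if t \<le> s then \<psi>' s else 0) \<partial>lborel)"
    proof -
      have "F t s = h t * (if t \<le> s then \<psi>' s else 0)" for s by (simp add: F_def)
      then show ?thesis by simp
    qed
    also have "\<dots> = h t * (- \<psi> t)"
      using line_ftc[OF d c, of B t] sup by force
    finally show ?thesis .
  qed
  ultimately show ?thesis by simp
qed

lemma line_holder:
  fixes h :: "real \<Rightarrow> real"
  assumes hm[measurable]: "h \<in> borel_measurable borel" and R: "R > 0"
    and sup: "\<And>t. \<bar>t\<bar> > R \<Longrightarrow> h t = 0"
  shows "ennreal (\<bar>\<integral>t. (if t \<le> s then h t else 0) \<partial>lborel\<bar> powr 3)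
     \<le> ennreal ((2*R) powr 2) * (\<integral>\<^sup>+ t. ennreal (\<bar>h t\<bar> powr 3) \<partial>lborel)"
proof (cases "(\<integral>\<^sup>+ t. ennreal (\<bar>h t\<bar> powr 3) \<partial>lborel) = \<infinity>")
  case True then show ?thesis using R by (simp add: ennreal_mult_top)
next
  case False
  have h3: "integrable lborel (\<lambda>t. \<bar>h t\<bar> powr 3)"
    by (rule integrableI_nonneg) (use False in \<open>auto simp: top.not_eq_extremum\<close>)
  define A where "A = (\<integral>t. \<bar>h t\<bar> powr 3 \<partial>lborel)"
  have A0: "A \<ge> 0" by (simp add: A_def)
  have nnA: "(\<integral>\<^sup>+ t. ennreal (\<bar>h t\<bar> powr 3) \<partial>lborel) = ennreal A"
    unfolding A_def by (rule nn_integral_eq_integral[OF h3]) auto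
  define w where "w = (\<lambda>t::real. indicator {-R..R} t :: real)"
  have wm[measurable]: "w \<in> borel_measurable borel" by (simp add: w_def)
  have hm': "h \<in> borel_measurable lborel" "w \<in> borel_measurable lborel" by auto
  note wm' = hm'(2)
  have w32: "(\<lambda>t. \<bar>w t\<bar> powr (3/2)) = w" by (auto simp: w_def indicator_def)
  have wi: "integrable lborel (\<lambda>t. \<bar>w t\<bar> powr (3/2))" unfolding w32 by (simp add: w_def ind_int)
  have wint: "(\<integral>t. \<bar>w t\<bar> powr (3/2) \<partial>lborel) = 2 * R" unfolding w32 using R by (simp add: w_def)
  have hw: "integrable lborel (\<lambda>t. h t * w t)" by (rule holder3_int[OF hm'(1) wm' h3 wi])
  have hwb: "(\<integral>t. \<bar>h t * w t\<bar> \<partial>lborel) \<le> A powr (1/3) * (2*R) powr (2/3)"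
    using holder3[OF hm'(1) wm' h3 wi] by (simp add: A_def wint)
  have pt: "\<bar>(if t \<le> s then h t else 0)\<bar> \<le> \<bar>h t * w t\<bar>" for t
    using sup[of t] by (auto simp: w_def indicator_def)
  have fi: "integrable lborel (\<lambda>t. (if t \<le> s then h t else 0))"
    by (rule Bochner_Integration.integrable_bound[OF integrable_abs[OF hw]]) (use pt in auto)
  have "\<bar>\<integral>t. (if t \<le> s then h t else 0) \<partial>lborel\<bar> \<le> (\<integral>t. \<bar>h t * w t\<bar> \<partial>lborel)"
    by (rule integral_abs_bound_integral[OF fi integrable_abs[OF hw]]) (use pt in auto)
  also have "\<dots> \<le> A powr (1/3) * (2*R) powr (2/3)" by (rule hwb)
  finally have le: "\<bar>\<integral>t. (if t \<le> s then h t else 0) \<partial>lborel\<bar> \<le> A powr (1/3) * (2*R) powr (2/3)" .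
  have "\<bar>\<integral>t. (if t \<le> s then h t else 0) \<partial>lborel\<bar> powr 3 \<le> (A powr (1/3) * (2*R) powr (2/3)) powr 3"
    by (rule powr_mono2) (use le in auto)
  also have "\<dots> = A * (2*R) powr 2"
    using A0 R by (simp add: powr_mult powr_powr)
  finally have "\<bar>\<integral>t. (if t \<le> s then h t else 0) \<partial>lborel\<bar> powr 3 \<le> (2*R) powr 2 * A" by (simp only: mult.commute)
  then have "ennreal (\<bar>\<integral>t. (if t \<le> s then h t else 0) \<partial>lborel\<bar> powr 3) \<le> ennreal ((2*R) powr 2 * A)"
    by (rule ennreal_leI)
  also have "\<dots> = ennreal ((2*R) powr 2) * ennreal A" using A0 by (intro ennreal_mult) auto
  finally show ?thesis unfolding nnA .
qed

definition Vf :: "'n::finite \<Rightarrow> (real^'n \<Rightarrow> real) \<Rightarrow> real^'n \<Rightarrow> real" where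
  "Vf k g z = (\<integral>t. (if t \<le> z$k then g (z + (t - z$k) *\<^sub>R axis k 1) else 0) \<partial>lborel)"

lemma Vf_TK: "Vf k g (TK k (x,s)) = (\<integral>t. (if t \<le> s then g (TK k (x,t)) else 0) \<partial>lborel)"
proof -
  have "TK k (x, s + (t - s)) = TK k (x,t)" for t by simp
  then show ?thesis unfolding Vf_def TK_k TK_shift by presburger
qed

lemma nth_meas[measurable]: "(\<lambda>x::real^'n::finite. x $ k) \<in> borel_measurable borel"
  by (intro borel_measurable_continuous_onI continuous_intros)

lemma Vf_meas[measurable]: assumes [measurable]: "g \<in> borel_measurable borel"
  shows "Vf k g \<in> borel_measurable borel"
  unfolding Vf_def by measurable

lemma TK_cont: "continuous_on UNIV (\<lambda>t. TK k (x,t))"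
  unfolding TK_def by (simp add: continuous_intros)

lemma TK_line_meas[measurable]: "g \<in> borel_measurable borel \<Longrightarrow> (\<lambda>t. g (TK k (x,t))) \<in> borel_measurable borel"
  using measurable_comp[OF borel_measurable_continuous_onI[OF TK_cont] ]
  by (auto simp: comp_def)

lemma Vf_L3:
  fixes g :: "real^'n::finite \<Rightarrow> real"
  assumes gm[measurable]: "g \<in> borel_measurable borel" and R: "R > 0"
    and sup: "\<And>z. \<bar>z$k\<bar> > R \<Longrightarrow> g z = 0"
  shows "(\<integral>\<^sup>+ z. indicator {z. \<bar>z$k\<bar> \<le> R} z * ennreal (\<bar>Vf k g z\<bar> powr 3) \<partial>lborel)
     \<le> ennreal ((2*R) powr 3) * (\<integral>\<^sup>+ z. ennreal (\<bar>g z\<bar> powr 3) \<partial>lborel)"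
proof -
  have ms: "{z::real^'n. \<bar>z$k\<bar> \<le> R} \<in> sets borel"
    by (intro borel_closed closed_Collect_le continuous_intros)
  define J where "J x = (\<integral>\<^sup>+ t. ennreal (\<bar>g (TK k (x,t))\<bar> powr 3) \<partial>lborel)" for x
  have Jm: "J \<in> borel_measurable (PK k)" unfolding J_def by measurable
  have "(\<integral>\<^sup>+ z. indicator {z. \<bar>z$k\<bar> \<le> R} z * ennreal (\<bar>Vf k g z\<bar> powr 3) \<partial>lborel)
      = (\<integral>\<^sup>+ x. (\<integral>\<^sup>+ s. indicator {z. \<bar>z$k\<bar> \<le> R} (TK k (x,s)) * ennreal (\<bar>Vf k g (TK k (x,s))\<bar> powr 3) \<partial>lborel) \<partial>PK k)"
    using ms by (intro nn_lborel_TK) measurable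
  also have "\<dots> = (\<integral>\<^sup>+ x. (\<integral>\<^sup>+ s. indicator {-R..R} s * ennreal (\<bar>\<integral>t. (if t \<le> s then g (TK k (x,t)) else 0) \<partial>lborel\<bar> powr 3) \<partial>lborel) \<partial>PK k)"
  proof -
    have "indicator {z. \<bar>z$k\<bar> \<le> R} (TK k (x,s)) = (indicator {-R..R} s :: ennreal)" for x s
      by (auto simp: TK_k indicator_def)
    then show ?thesis by (simp add: Vf_TK)
  qed
  also have "\<dots> \<le> (\<integral>\<^sup>+ x. (\<integral>\<^sup>+ s. indicator {-R..R} s * (ennreal ((2*R) powr 2) * J x) \<partial>lborel) \<partial>PK k)"
    unfolding J_def
    by (intro nn_integral_mono mult_left_mono line_holder) (auto simp: R sup TK_k)
  also have "\<dots> = (\<integral>\<^sup>+ x. ennreal (2*R) * (ennreal ((2*R) powr 2) * J x) \<partial>PK k)"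
    using R by (simp add: nn_integral_multc emeasure_lborel_Icc_eq)
  also have "\<dots> = ennreal (2*R) * ennreal ((2*R) powr 2) * (\<integral>\<^sup>+ x. J x \<partial>PK k)"
    using Jm by (simp add: nn_integral_cmult mult.assoc)
  also have "(\<integral>\<^sup>+ x. J x \<partial>PK k) = (\<integral>\<^sup>+ z. ennreal (\<bar>g z\<bar> powr 3) \<partial>lborel)"
    unfolding J_def by (rule nn_lborel_TK[symmetric]) measurable
  also have "ennreal (2*R) * ennreal ((2*R) powr 2) = ennreal ((2*R) powr 3)"
  proof -
    have "(2*R) * (2*R) powr 2 = (2*R) powr 3"
      using R by (simp add: powr_numeral power3_eq_cube power2_eq_square)
    then show ?thesis using R by (simp add: ennreal_mult[symmetric])
  qed
  finally show ?thesis .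
qed


lemma TK_deriv: "((\<lambda>s. TK k (x,s)) has_derivative (\<lambda>h. h *\<^sub>R axis k 1)) (at s)"
  unfolding TK_def by (auto intro!: derivative_eq_intros)

lemma Vf_weak:
  fixes g \<phi> :: "real^'n::finite \<Rightarrow> real" and G :: "real^'n \<Rightarrow> real^'n"
  assumes gm[measurable]: "g \<in> borel_measurable borel" and gi: "integrable lborel g"
    and d: "\<And>z. (\<phi> has_derivative (\<lambda>h. G z \<bullet> h)) (at z)"
    and c: "continuous_on UNIV G"
    and sup: "\<And>z. \<bar>z$k\<bar> > R \<Longrightarrow> \<phi> z = 0 \<and> G z = 0"
    and bd: "\<And>z. \<bar>G z $ k\<bar> \<le> C"
    and i1: "integrable lborel (\<lambda>z. Vf k g z * G z $ k)"
    and i2: "integrable lborel (\<lambda>z. g z * \<phi> z)"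
  shows "(\<integral>z. Vf k g z * G z $ k \<partial>lborel) = - (\<integral>z. g z * \<phi> z \<partial>lborel)"
proof -
  have Gm[measurable]: "G \<in> borel_measurable borel" using c by (rule borel_measurable_continuous_onI)
  have phic: "continuous_on UNIV \<phi>"
    using d by (intro has_derivative_continuous_on) (auto intro: has_derivative_at_withinI)
  have phim[measurable]: "\<phi> \<in> borel_measurable borel" using phic by (rule borel_measurable_continuous_onI)
  have L: "(\<integral>z. Vf k g z * G z $ k \<partial>lborel)
      = (\<integral>x. (\<integral>s. Vf k g (TK k (x,s)) * G (TK k (x,s)) $ k \<partial>lborel) \<partial>PK k)"
    by (rule integral_TK[OF _ i1]) measurable
  have Rr: "(\<integral>z. g z * \<phi> z \<partial>lborel)
      = (\<integral>x. (\<integral>t. g (TK k (x,t)) * \<phi> (TK k (x,t)) \<partial>lborel) \<partial>PK k)"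
    by (rule integral_TK[OF _ i2]) measurable
  have ae: "AE x in PK k. integrable lborel (\<lambda>t. g (TK k (x,t)))"
    by (rule AE_TK[OF gm gi])
  have "(\<integral>x. (\<integral>s. Vf k g (TK k (x,s)) * G (TK k (x,s)) $ k \<partial>lborel) \<partial>PK k)
     = (\<integral>x. - (\<integral>t. g (TK k (x,t)) * \<phi> (TK k (x,t)) \<partial>lborel) \<partial>PK k)"
  proof (rule integral_cong_AE)
    show "(\<lambda>x. \<integral>s. Vf k g (TK k (x,s)) * G (TK k (x,s)) $ k \<partial>lborel) \<in> borel_measurable (PK k)"
      by measurable
    show "(\<lambda>x. - (\<integral>t. g (TK k (x,t)) * \<phi> (TK k (x,t)) \<partial>lborel)) \<in> borel_measurable (PK k)"
      by measurable
    show "AE x in PK k. (\<integral>s. Vf k g (TK k (x,s)) * G (TK k (x,s)) $ k \<partial>lborel)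
        = - (\<integral>t. g (TK k (x,t)) * \<phi> (TK k (x,t)) \<partial>lborel)"
      using ae
    proof eventually_elim
      case (elim x)
      have dd: "((\<lambda>s. \<phi> (TK k (x,s))) has_real_derivative G (TK k (x,s)) $ k) (at s)" for s
      proof -
        have "((\<lambda>s. \<phi> (TK k (x,s))) has_derivative (\<lambda>h. G (TK k (x,s)) \<bullet> (h *\<^sub>R axis k 1))) (at s)"
          using diff_chain_at[OF TK_deriv d] by (simp add: comp_def)
        moreover have "(\<lambda>h. G (TK k (x,s)) \<bullet> (h *\<^sub>R axis k 1)) = (*) (G (TK k (x,s)) $ k)"
          by (auto simp: inner_axis)
        ultimately show ?thesis by (simp add: has_field_derivative_def)
      qed
      have cc: "continuous_on UNIV (\<lambda>s. G (TK k (x,s)) $ k)"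
        by (intro continuous_on_component continuous_on_compose2[OF c TK_cont]) auto
      have "(\<integral>s. (\<integral>t. (if t \<le> s then g (TK k (x,t)) else 0) \<partial>lborel) * G (TK k (x,s)) $ k \<partial>lborel)
          = - (\<integral>t. g (TK k (x,t)) * \<phi> (TK k (x,t)) \<partial>lborel)"
      proof (rule line_ibp[OF TK_line_meas[OF gm] elim dd cc])
        show "\<bar>s\<bar> > R \<Longrightarrow> \<phi> (TK k (x,s)) = 0 \<and> G (TK k (x,s)) $ k = 0" for s
          using sup[of "TK k (x,s)"] by (simp add: TK_k)
        show "\<bar>G (TK k (x,s)) $ k\<bar> \<le> C" for s by (rule bd)
      qed
      then show ?case by (simp add: Vf_TK)
    qed
  qed
  then show ?thesis using L Rr by simp
qed

lemma bor_leb: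
  assumes "f \<in> borel_measurable (borel :: ('a::euclidean_space) measure)"
  shows "f \<in> borel_measurable (lebesgue_on \<Omega>)"
proof -
  have "f \<in> borel_measurable lborel" using assms by simp
  then have "f \<in> borel_measurable (completion lborel)" by (rule measurable_completion)
  then show ?thesis by (rule measurable_restrict_space1)
qed

lemma open_leb: "open (\<Omega>::('a::euclidean_space) set) \<Longrightarrow> \<Omega> \<in> sets lebesgue"
  by (simp add: borel_open sets_completionI_sets)

lemma bridge:
  fixes f F :: "'a::euclidean_space \<Rightarrow> 'b::{banach, second_countable_topology}"
  assumes \<Omega>: "open \<Omega>" and fm: "f \<in> borel_measurable (lebesgue_on \<Omega>)"
    and Fm: "F \<in> borel_measurable borel"
    and ae: "AE x in lborel. indicator \<Omega> x *\<^sub>R f x = F x"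
  shows "integrable (lebesgue_on \<Omega>) f \<longleftrightarrow> integrable lborel F"
    and "integral\<^sup>L (lebesgue_on \<Omega>) f = integral\<^sup>L lborel F"
proof -
  have S: "\<Omega> \<inter> space lebesgue \<in> sets lebesgue" using open_leb[OF \<Omega>] by simp
  have m1: "(\<lambda>x. indicator \<Omega> x *\<^sub>R f x) \<in> borel_measurable lebesgue"
    using borel_measurable_restrict_space_iff[OF S, THEN iffD1, OF fm] by simp
  have FmL: "F \<in> borel_measurable lborel" using Fm by simp
  have m2: "F \<in> borel_measurable lebesgue" using measurable_completion[OF FmL] .
  have ae': "AE x in lebesgue. indicator \<Omega> x *\<^sub>R f x = F x" using AE_completion[OF ae] .
  show "integrable (lebesgue_on \<Omega>) f \<longleftrightarrow> integrable lborel F"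
  proof -
    have "integrable (lebesgue_on \<Omega>) f \<longleftrightarrow> integrable lebesgue (\<lambda>x. indicator \<Omega> x *\<^sub>R f x)"
      by (rule integrable_restrict_space[OF S])
    also have "\<dots> \<longleftrightarrow> integrable lebesgue F"
      by (rule integrable_cong_AE[OF m1 m2 ae'])
    also have "\<dots> \<longleftrightarrow> integrable lborel F" by (rule integrable_completion[OF FmL])
    finally show ?thesis .
  qed
  show "integral\<^sup>L (lebesgue_on \<Omega>) f = integral\<^sup>L lborel F"
  proof -
    have "integral\<^sup>L (lebesgue_on \<Omega>) f = integral\<^sup>L lebesgue (\<lambda>x. indicator \<Omega> x *\<^sub>R f x)"
      by (rule integral_restrict_space[OF S])
    also have "\<dots> = integral\<^sup>L lebesgue F"
      by (rule integral_cong_AE[OF m1 m2 ae'])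
    also have "\<dots> = integral\<^sup>L lborel F" by (rule integral_completion[OF FmL])
    finally show ?thesis .
  qed
qed

lemma grad_zero_outside:
  fixes \<phi> :: "real^'n::finite \<Rightarrow> real"
  assumes d: "(\<phi> has_derivative (\<lambda>h. G \<bullet> h)) (at z)"
    and K: "closed K" "z \<notin> K" and z0: "\<And>y. y \<notin> K \<Longrightarrow> \<phi> y = 0"
  shows "G = 0"
proof -
  have "((\<lambda>y. 0::real) has_derivative (\<lambda>h. 0)) (at z)" by simp
  then have "(\<phi> has_derivative (\<lambda>h. 0)) (at z)"
  proof (rule has_derivative_transform_within_open[where s="- K"])
    show "open (- K)" using K(1) by (simp add: open_Compl)
    show "z \<in> - K" using K(2) by simp
    show "\<And>y. y \<in> - K \<Longrightarrow> 0 = \<phi> y" using z0 by simp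
  qed
  with d have "(\<lambda>h. G \<bullet> h) = (\<lambda>h. 0)" by (rule has_derivative_unique)
  then have "G \<bullet> G = 0" by meson
  then show ?thesis by simp
qed

lemma abs_le_cube: "\<bar>a::real\<bar> \<le> 1 + \<bar>a\<bar> powr 3"
proof (cases "\<bar>a\<bar> \<le> 1")
  case False
  then have "\<bar>a\<bar> powr 1 \<le> \<bar>a\<bar> powr 3" by (intro powr_mono) auto
  then show ?thesis by simp
next
  case True
  have "0 \<le> \<bar>a\<bar> powr 3" by simp
  then show ?thesis using True by linarith
qed

lemma div_inverse:
  fixes \<Omega> :: "(real^'n::finite) set" and g :: "real^'n \<Rightarrow> real"
  assumes \<Omega>o: "open \<Omega>" and R: "R > 0" and \<Omega>b: "\<Omega> \<subseteq> cball 0 R"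
    and g: "Lp 3 \<Omega> g"
  shows "\<exists>v dv. Lp 3 \<Omega> v \<and> Lp 3 \<Omega> dv \<and> weak_div \<Omega> v dv \<and> (AE x in lebesgue_on \<Omega>. dv x = g x) \<and>
    integral\<^sup>L (lebesgue_on \<Omega>) (\<lambda>x. norm (v x) powr 3) \<le> (2*R) powr 3 * integral\<^sup>L (lebesgue_on \<Omega>) (\<lambda>x. norm (g x) powr 3)"
proof -
  define k where "k = (undefined::'n)"
  have S: "\<Omega> \<inter> space lebesgue \<in> sets lebesgue" using open_leb[OF \<Omega>o] by simp
  have \<Omega>m[measurable]: "\<Omega> \<in> sets borel" using \<Omega>o by (simp add: borel_open)
  have \<Omega>bd: "bounded \<Omega>" using bounded_subset[OF bounded_cball \<Omega>b] .
  have ind\<Omega>: "integrable lborel (indicator \<Omega> :: _ \<Rightarrow> real)"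
    using emeasure_bounded_finite[OF \<Omega>bd] by (intro integrable_real_indicator) auto
  have \<Omega>k: "x \<in> \<Omega> \<Longrightarrow> \<bar>x$k\<bar> \<le> R" for x
    using \<Omega>b component_le_norm_cart[of x k] by (auto simp: dist_norm)
  have gm: "g \<in> borel_measurable (lebesgue_on \<Omega>)"
    and gi: "integrable (lebesgue_on \<Omega>) (\<lambda>x. \<bar>g x\<bar> powr 3)" using g by (auto simp: Lp_def)
  have g1m: "(\<lambda>x. indicator \<Omega> x *\<^sub>R g x) \<in> borel_measurable lebesgue"
    using borel_measurable_restrict_space_iff[OF S, THEN iffD1, OF gm] .
  obtain g2 where g2m: "g2 \<in> borel_measurable lborel"
    and g2ae: "AE x in lborel. indicator \<Omega> x *\<^sub>R g x = g2 x"
    using completion_ex_borel_measurable_real[OF g1m] by blast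
  have [measurable]: "g2 \<in> borel_measurable borel" using g2m by simp
  define g0 where "g0 x = indicator \<Omega> x * g2 x" for x
  have g0m[measurable]: "g0 \<in> borel_measurable borel" unfolding g0_def by measurable
  have g0ae: "AE x in lborel. indicator \<Omega> x *\<^sub>R g x = g0 x"
    using g2ae by eventually_elim (auto simp: g0_def indicator_def)
  have g0out: "x \<notin> \<Omega> \<Longrightarrow> g0 x = 0" for x by (simp add: g0_def)
  have g0sup: "\<bar>x$k\<bar> > R \<Longrightarrow> g0 x = 0" for x using \<Omega>k g0out by force
  have g03: "integrable lborel (\<lambda>x. \<bar>g0 x\<bar> powr 3)"
     "integral\<^sup>L (lebesgue_on \<Omega>) (\<lambda>x. \<bar>g x\<bar> powr 3) = (\<integral>x. \<bar>g0 x\<bar> powr 3 \<partial>lborel)"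
  proof -
    have ae: "AE x in lborel. indicator \<Omega> x *\<^sub>R \<bar>g x\<bar> powr 3 = \<bar>g0 x\<bar> powr 3"
      using g0ae by eventually_elim (auto simp: indicator_def g0out)
    have fm: "(\<lambda>x. \<bar>g x\<bar> powr 3) \<in> borel_measurable (lebesgue_on \<Omega>)" using gm by measurable
    have Fm: "(\<lambda>x. \<bar>g0 x\<bar> powr 3) \<in> borel_measurable borel" by measurable
    show "integrable lborel (\<lambda>x. \<bar>g0 x\<bar> powr 3)"
      using bridge(1)[OF \<Omega>o fm Fm ae] gi by simp
    show "integral\<^sup>L (lebesgue_on \<Omega>) (\<lambda>x. \<bar>g x\<bar> powr 3) = (\<integral>x. \<bar>g0 x\<bar> powr 3 \<partial>lborel)"
      using bridge(2)[OF \<Omega>o fm Fm ae] .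
  qed
  have g0i: "integrable lborel g0"
  proof (rule Bochner_Integration.integrable_bound[where f="\<lambda>x. indicator \<Omega> x + \<bar>g0 x\<bar> powr 3"])
    show "integrable lborel (\<lambda>x. indicator \<Omega> x + \<bar>g0 x\<bar> powr 3)" using ind\<Omega> g03(1) by simp
    show "g0 \<in> borel_measurable lborel" by simp
    show "AE x in lborel. norm (g0 x) \<le> norm (indicator \<Omega> x + \<bar>g0 x\<bar> powr 3 :: real)"
    proof (rule AE_I2)
      fix x show "norm (g0 x) \<le> norm (indicator \<Omega> x + \<bar>g0 x\<bar> powr 3 :: real)"
        using abs_le_cube[of "g0 x"] g0out[of x] by (cases "x \<in> \<Omega>") auto
    qed
  qed
  define V where "V = Vf k g0"
  have Vm[measurable]: "V \<in> borel_measurable borel" unfolding V_def by measurable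
  define W where "W z = indicator {z. \<bar>z$k\<bar> \<le> R} z * \<bar>V z\<bar> powr 3" for z
  have Wset[measurable]: "{z::real^'n. \<bar>z$k\<bar> \<le> R} \<in> sets borel"
    by (intro borel_closed closed_Collect_le continuous_intros)
  have Wm[measurable]: "W \<in> borel_measurable borel" unfolding W_def by measurable
  have nnW: "(\<integral>\<^sup>+ z. ennreal (W z) \<partial>lborel) \<le> ennreal ((2*R) powr 3 * (\<integral>x. \<bar>g0 x\<bar> powr 3 \<partial>lborel))"
  proof -
    have "(\<integral>\<^sup>+ z. ennreal (W z) \<partial>lborel) = (\<integral>\<^sup>+ z. indicator {z. \<bar>z$k\<bar> \<le> R} z * ennreal (\<bar>V z\<bar> powr 3) \<partial>lborel)"
      by (intro nn_integral_cong) (simp add: W_def indicator_def)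
    also have "\<dots> \<le> ennreal ((2*R) powr 3) * (\<integral>\<^sup>+ z. ennreal (\<bar>g0 z\<bar> powr 3) \<partial>lborel)"
      unfolding V_def by (rule Vf_L3[OF g0m R g0sup])
    also have "(\<integral>\<^sup>+ z. ennreal (\<bar>g0 z\<bar> powr 3) \<partial>lborel) = ennreal (\<integral>x. \<bar>g0 x\<bar> powr 3 \<partial>lborel)"
      by (rule nn_integral_eq_integral[OF g03(1)]) auto
    also have "ennreal ((2*R) powr 3) * ennreal (\<integral>x. \<bar>g0 x\<bar> powr 3 \<partial>lborel)
        = ennreal ((2*R) powr 3 * (\<integral>x. \<bar>g0 x\<bar> powr 3 \<partial>lborel))"
      by (rule ennreal_mult[symmetric]) auto
    finally show ?thesis .
  qed
  have Wi: "integrable lborel W"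
    by (rule integrableI_nonneg) (use nnW in \<open>auto simp: W_def top.not_eq_extremum intro: le_less_trans\<close>)
  have Wb: "(\<integral>z. W z \<partial>lborel) \<le> (2*R) powr 3 * (\<integral>x. \<bar>g0 x\<bar> powr 3 \<partial>lborel)"
  proof -
    have "ennreal (\<integral>z. W z \<partial>lborel) = (\<integral>\<^sup>+ z. ennreal (W z) \<partial>lborel)"
      by (rule nn_integral_eq_integral[OF Wi, symmetric]) (auto simp: W_def)
    with nnW have "ennreal (\<integral>z. W z \<partial>lborel) \<le> ennreal ((2*R) powr 3 * (\<integral>x. \<bar>g0 x\<bar> powr 3 \<partial>lborel))"
      by simp
    moreover have "0 \<le> (2*R) powr 3 * (\<integral>x. \<bar>g0 x\<bar> powr 3 \<partial>lborel)" by simp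
    ultimately show ?thesis by (simp add: ennreal_le_iff)
  qed
  define v where "v z = V z *\<^sub>R (axis k 1 :: real^'n)" for z
  have vm[measurable]: "v \<in> borel_measurable borel" unfolding v_def by measurable
  have nv: "norm (v z) = \<bar>V z\<bar>" for z by (simp add: v_def)
  have v3: "integrable (lebesgue_on \<Omega>) (\<lambda>x. norm (v x) powr 3)"
     "integral\<^sup>L (lebesgue_on \<Omega>) (\<lambda>x. norm (v x) powr 3) = (\<integral>z. indicator \<Omega> z * \<bar>V z\<bar> powr 3 \<partial>lborel)"
  proof -
    have fm: "(\<lambda>x. norm (v x) powr 3) \<in> borel_measurable (lebesgue_on \<Omega>)" by (rule bor_leb) measurable
    have Fm: "(\<lambda>z. indicator \<Omega> z * \<bar>V z\<bar> powr 3) \<in> borel_measurable borel" by measurable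
    have ae: "AE x in lborel. indicator \<Omega> x *\<^sub>R norm (v x) powr 3 = indicator \<Omega> x * \<bar>V x\<bar> powr 3"
      by (simp add: nv)
    have Fi: "integrable lborel (\<lambda>z. indicator \<Omega> z * \<bar>V z\<bar> powr 3)"
    proof (rule Bochner_Integration.integrable_bound[OF Wi])
      show "(\<lambda>z. indicator \<Omega> z * \<bar>V z\<bar> powr 3) \<in> borel_measurable lborel" by simp
      show "AE x in lborel. norm (indicator \<Omega> x * \<bar>V x\<bar> powr 3) \<le> norm (W x)"
        by (rule AE_I2) (auto simp: W_def indicator_def \<Omega>k)
    qed
    show "integrable (lebesgue_on \<Omega>) (\<lambda>x. norm (v x) powr 3)"
      using bridge(1)[OF \<Omega>o fm Fm ae] Fi by simp
    show "integral\<^sup>L (lebesgue_on \<Omega>) (\<lambda>x. norm (v x) powr 3) = (\<integral>z. indicator \<Omega> z * \<bar>V z\<bar> powr 3 \<partial>lborel)"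
      using bridge(2)[OF \<Omega>o fm Fm ae] .
    have "(\<integral>z. indicator \<Omega> z * \<bar>V z\<bar> powr 3 \<partial>lborel) \<le> (\<integral>z. W z \<partial>lborel)"
      by (intro integral_mono Fi Wi) (auto simp: W_def indicator_def \<Omega>k)
  qed
  have vbound: "integral\<^sup>L (lebesgue_on \<Omega>) (\<lambda>x. norm (v x) powr 3) \<le> (2*R) powr 3 * integral\<^sup>L (lebesgue_on \<Omega>) (\<lambda>x. norm (g x) powr 3)"
  proof -
    have Fi: "integrable lborel (\<lambda>z. indicator \<Omega> z * \<bar>V z\<bar> powr 3)"
      by (rule Bochner_Integration.integrable_bound[OF Wi]) (auto simp: W_def indicator_def \<Omega>k)
    have "(\<integral>z. indicator \<Omega> z * \<bar>V z\<bar> powr 3 \<partial>lborel) \<le> (\<integral>z. W z \<partial>lborel)"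
      by (intro integral_mono Fi Wi) (auto simp: W_def indicator_def \<Omega>k)
    then show ?thesis using Wb v3(2) g03(2) by simp
  qed
  have Lv: "Lp 3 \<Omega> v" unfolding Lp_def using v3(1) by (auto intro: bor_leb)
  have Lg0: "Lp 3 \<Omega> g0"
  proof -
    have fm: "(\<lambda>x. \<bar>g0 x\<bar> powr 3) \<in> borel_measurable (lebesgue_on \<Omega>)" by (rule bor_leb) measurable
    have Fm: "(\<lambda>x. \<bar>g0 x\<bar> powr 3) \<in> borel_measurable borel" by measurable
    have ae: "AE x in lborel. indicator \<Omega> x *\<^sub>R \<bar>g0 x\<bar> powr 3 = \<bar>g0 x\<bar> powr 3"
      by (rule AE_I2) (auto simp: indicator_def g0out)
    show ?thesis unfolding Lp_def using bridge(1)[OF \<Omega>o fm Fm ae] g03(1) by (auto intro: bor_leb)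
  qed
  have aeg: "AE x in lebesgue_on \<Omega>. g0 x = g x"
  proof -
    have "AE x in lebesgue. indicator \<Omega> x *\<^sub>R g x = g0 x" using AE_completion[OF g0ae] .
    then have "AE x in lebesgue. x \<in> \<Omega> \<longrightarrow> g0 x = g x" by eventually_elim auto
    then show ?thesis using AE_restrict_space_iff[OF S] by blast
  qed
  have wd: "weak_div \<Omega> v g0"
    unfolding weak_div_def
  proof (intro allI impI)
    fix \<phi> Gr assume tf: "test_fun \<Omega> \<phi> Gr"
    define K where "K = closure {x. \<phi> x \<noteq> 0}"
    have d: "\<And>x. (\<phi> has_derivative (\<lambda>h. Gr x \<bullet> h)) (at x)" and cG: "continuous_on UNIV Gr"
      and cK: "compact K" and K\<Omega>: "K \<subseteq> \<Omega>" using tf by (auto simp: test_fun_def K_def)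
    have Kc: "closed K" using cK by (rule compact_imp_closed)
    have \<phi>0: "x \<notin> K \<Longrightarrow> \<phi> x = 0" for x using closure_subset[of "{x. \<phi> x \<noteq> 0}"] by (auto simp: K_def)
    have G0: "x \<notin> K \<Longrightarrow> Gr x = 0" for x by (rule grad_zero_outside[OF d Kc _ \<phi>0])
    have phic: "continuous_on UNIV \<phi>"
      using d by (intro has_derivative_continuous_on) (auto intro: has_derivative_at_withinI)
    have Gm[measurable]: "Gr \<in> borel_measurable borel" using cG by (rule borel_measurable_continuous_onI)
    have phim[measurable]: "\<phi> \<in> borel_measurable borel" using phic by (rule borel_measurable_continuous_onI)
    obtain CG where CG: "\<And>x. \<bar>Gr x $ k\<bar> \<le> CG" and CG0: "CG \<ge> 0"
    proof -
      have "bounded (Gr ` K)"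
        by (intro compact_imp_bounded compact_continuous_image continuous_on_subset[OF cG] cK) auto
      then obtain B where B: "\<And>x. x \<in> K \<Longrightarrow> norm (Gr x) \<le> B" by (auto simp: bounded_iff)
      show ?thesis
      proof (rule that[of "max B 0"])
        fix x show "\<bar>Gr x $ k\<bar> \<le> max B 0"
          using B[of x] G0[of x] component_le_norm_cart[of "Gr x" k] by (cases "x \<in> K") auto
      qed auto
    qed
    obtain C\<phi> where C\<phi>: "\<And>x. \<bar>\<phi> x\<bar> \<le> C\<phi>" and C\<phi>0: "C\<phi> \<ge> 0"
    proof -
      have "bounded (\<phi> ` K)"
        by (intro compact_imp_bounded compact_continuous_image continuous_on_subset[OF phic] cK) auto
      then obtain B where B: "\<And>x. x \<in> K \<Longrightarrow> norm (\<phi> x) \<le> B" by (auto simp: bounded_iff)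
      show ?thesis
      proof (rule that[of "max B 0"])
        fix x show "\<bar>\<phi> x\<bar> \<le> max B 0"
          using B[of x] \<phi>0[of x] by (cases "x \<in> K") auto
      qed auto
    qed
    have Km[measurable]: "K \<in> sets borel" using Kc by (rule borel_closed)
    have indK: "integrable lborel (indicator K :: _ \<Rightarrow> real)"
      using emeasure_compact_finite[OF cK] by (intro integrable_real_indicator) auto
    have i1: "integrable lborel (\<lambda>z. V z * Gr z $ k)"
    proof (rule Bochner_Integration.integrable_bound[where f="\<lambda>z. CG * (indicator K z + W z)"])
      show "integrable lborel (\<lambda>z. CG * (indicator K z + W z))" using indK Wi by simp
      show "(\<lambda>z. V z * Gr z $ k) \<in> borel_measurable lborel" by simp
      show "AE z in lborel. norm (V z * Gr z $ k) \<le> norm (CG * (indicator K z + W z))"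
      proof (rule AE_I2)
        fix z
        show "norm (V z * Gr z $ k) \<le> norm (CG * (indicator K z + W z))"
        proof (cases "z \<in> K")
          case True
          then have "\<bar>z$k\<bar> \<le> R" using K\<Omega> \<Omega>k by auto
          then have Wz: "W z = \<bar>V z\<bar> powr 3" by (simp add: W_def)
          have "\<bar>V z * Gr z $ k\<bar> \<le> \<bar>V z\<bar> * CG" by (simp add: abs_mult mult_left_mono CG)
          also have "\<dots> \<le> (1 + \<bar>V z\<bar> powr 3) * CG" by (intro mult_right_mono abs_le_cube CG0)
          finally show ?thesis using True Wz CG0 by (simp add: mult.commute)
        next
          case False then show ?thesis using G0[of z] CG0 by (simp add: W_def)
        qed
      qed
    qed
    have i2: "integrable lborel (\<lambda>z. g0 z * \<phi> z)"
    proof (rule Bochner_Integration.integrable_bound[where f="\<lambda>z. C\<phi> * \<bar>g0 z\<bar>"])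
      show "integrable lborel (\<lambda>z. C\<phi> * \<bar>g0 z\<bar>)" using g0i by simp
      show "(\<lambda>z. g0 z * \<phi> z) \<in> borel_measurable lborel" by simp
      show "AE z in lborel. norm (g0 z * \<phi> z) \<le> norm (C\<phi> * \<bar>g0 z\<bar>)"
        proof (rule AE_I2)
        fix z
        have "\<bar>g0 z\<bar> * \<bar>\<phi> z\<bar> \<le> \<bar>g0 z\<bar> * C\<phi>" by (intro mult_left_mono C\<phi>) auto
        then show "norm (g0 z * \<phi> z) \<le> norm (C\<phi> * \<bar>g0 z\<bar>)" using C\<phi>0 by (simp add: abs_mult mult.commute)
      qed
    qed
    have sup: "\<bar>z$k\<bar> > R \<Longrightarrow> \<phi> z = 0 \<and> Gr z = 0" for z
      using \<Omega>k[of z] K\<Omega> \<phi>0[of z] G0[of z] by auto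
    have main: "(\<integral>z. V z * Gr z $ k \<partial>lborel) = - (\<integral>z. g0 z * \<phi> z \<partial>lborel)"
      unfolding V_def by (rule Vf_weak[OF g0m g0i d cG sup CG]) (use i1 i2 in \<open>simp_all add: V_def\<close>)
    have e1: "integral\<^sup>L (lebesgue_on \<Omega>) (\<lambda>x. v x \<bullet> Gr x) = (\<integral>z. V z * Gr z $ k \<partial>lborel)"
    proof (rule bridge(2)[OF \<Omega>o])
      show "(\<lambda>x. v x \<bullet> Gr x) \<in> borel_measurable (lebesgue_on \<Omega>)" by (rule bor_leb) measurable
      show "(\<lambda>z. V z * Gr z $ k) \<in> borel_measurable borel" by measurable
      show "AE x in lborel. indicator \<Omega> x *\<^sub>R (v x \<bullet> Gr x) = V x * Gr x $ k"
      proof (rule AE_I2)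
        fix x
        show "indicator \<Omega> x *\<^sub>R (v x \<bullet> Gr x) = V x * Gr x $ k"
        proof (cases "x \<in> \<Omega>")
          case False
          then have "x \<notin> K" using K\<Omega> by auto
          then show ?thesis using G0[of x] False by simp
        qed (auto simp: v_def inner_axis')
      qed
    qed
    have e2: "integral\<^sup>L (lebesgue_on \<Omega>) (\<lambda>x. g0 x * \<phi> x) = (\<integral>z. g0 z * \<phi> z \<partial>lborel)"
    proof (rule bridge(2)[OF \<Omega>o])
      show "(\<lambda>x. g0 x * \<phi> x) \<in> borel_measurable (lebesgue_on \<Omega>)" by (rule bor_leb) measurable
      show "(\<lambda>z. g0 z * \<phi> z) \<in> borel_measurable borel" by measurable
      show "AE x in lborel. indicator \<Omega> x *\<^sub>R (g0 x * \<phi> x) = g0 x * \<phi> x"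
        by (rule AE_I2) (auto simp: indicator_def g0out)
    qed
    show "integral\<^sup>L (lebesgue_on \<Omega>) (\<lambda>x. v x \<bullet> Gr x) = - integral\<^sup>L (lebesgue_on \<Omega>) (\<lambda>x. g0 x * \<phi> x)"
      using e1 e2 main by simp
  qed
  show ?thesis using Lv Lg0 wd aeg vbound by blast
qed

lemma arith_main:
  fixes a d i eps F Gn Sn C1 C2 bl :: real
  assumes nn: "a \<ge> 0" "d \<ge> 0" "i \<ge> 0" "F \<ge> 0" "Gn \<ge> 0" "Sn \<ge> 0" "C1 \<ge> 0" "C2 \<ge> 0"
    and bl: "bl > 0" and eps: "eps > 0" "eps \<le> 1/2"
    and A: "d \<le> F + eps * i"
    and B: "bl * a^3 \<le> F * i^2 + Gn * a + Sn * d"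
    and C: "i^3 \<le> i * (C1 + C2 * a^2 + eps * d^2)"
  shows "a \<le> max 1 ((((F+Sn) * (2*(C1 + 2*F^2)) + Sn*(F+1)) + Gn + (F+Sn)*(2*C2)) / bl)
    \<and> i^2 \<le> 2*(C1 + 2*F^2) + 2*C2 * a^2
    \<and> d \<le> F + 1 + i^2"
proof -
  define C3 where "C3 = 2*(C1 + 2*F^2)"
  define C4 where "C4 = 2*C2"
  have C': "i^2 \<le> C1 + C2 * a^2 + eps * d^2"
  proof (cases "i = 0")
    case True then show ?thesis using nn eps by simp
  next
    case False
    then have "i > 0" using nn by simp
    moreover have "i * i^2 \<le> i * (C1 + C2 * a^2 + eps * d^2)" using C by (simp add: power3_eq_cube power2_eq_square)
    ultimately show ?thesis by simp
  qed
  have d2: "d^2 \<le> 2*F^2 + 2*eps^2*i^2"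
  proof -
    have "d^2 \<le> (F + eps*i)^2" using A nn by (intro power_mono) auto
    also have "\<dots> \<le> 2*F^2 + 2*eps^2*i^2"
    proof -
      have "(F+eps*i)^2 + (F-eps*i)^2 = 2*F^2 + 2*eps^2*i^2"
        by (simp add: power2_sum power2_diff power_mult_distrib)
      moreover have "0 \<le> (F-eps*i)^2" by simp
      ultimately show ?thesis by linarith
    qed
    finally show ?thesis .
  qed
  have e1: "eps * (2*F^2) \<le> F^2"
  proof -
    have "(2*eps) * F^2 \<le> 1 * F^2" using eps by (intro mult_right_mono) auto
    then show ?thesis by (simp add: algebra_simps)
  qed
  have e2: "eps * (2*eps^2*i^2) \<le> i^2/4"
  proof -
    have "eps^3 \<le> (1/2)^3" using eps by (intro power_mono) auto
    moreover have "(1/2::real)^3 = 1/8" by (simp add: power3_eq_cube)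
    ultimately have "2*eps^3 \<le> 1/4" by linarith
    then have "2*eps^3*i^2 \<le> (1/4)*i^2" by (intro mult_right_mono) auto
    then show ?thesis by (simp add: power3_eq_cube power2_eq_square algebra_simps)
  qed
  have "eps * d^2 \<le> eps * (2*F^2 + 2*eps^2*i^2)" using d2 eps by (intro mult_left_mono) auto
  also have "\<dots> \<le> F^2 + i^2/4" using e1 e2 by (simp add: algebra_simps)
  finally have "eps * d^2 \<le> F^2 + i^2/4" .
  moreover have "C2 * a^2 \<ge> 0" "F^2 \<ge> 0" using nn by auto
  ultimately have "i^2 \<le> 2*C1 + 4*F^2 + 2*(C2 * a^2)" using C' nn by linarith
  then have I2: "i^2 \<le> C3 + C4 * a^2" unfolding C3_def C4_def by (simp add: algebra_simps)
  have ii: "i \<le> 1 + i^2"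
  proof -
    have "0 \<le> (i - 1)^2" by simp
    then have "0 \<le> i^2 - 2*i + 1" by (simp add: power2_diff)
    then show ?thesis using nn by (smt (verit) zero_le_power2)
  qed
  have "eps * i \<le> i" using eps nn by (simp add: mult_left_le_one_le)
  then have dd: "d \<le> F + 1 + i^2" using A ii by linarith
  define c0 where "c0 = (F+Sn)*C3 + Sn*(F+1)"
  define c2 where "c2 = (F+Sn)*C4"
  have c0: "c0 \<ge> 0" and c2: "c2 \<ge> 0" using nn by (auto simp: c0_def c2_def C3_def C4_def)
  have "bl * a^3 \<le> F * i^2 + Gn * a + Sn * (F + 1 + i^2)"
  proof -
    have "Sn*d \<le> Sn*(F+1+i^2)" by (rule mult_left_mono[OF dd nn(6)])
    then show ?thesis using B by linarith
  qed
  also have "\<dots> = (F+Sn) * i^2 + Gn * a + Sn*(F+1)" by (simp add: algebra_simps)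
  also have "\<dots> \<le> (F+Sn) * (C3 + C4 * a^2) + Gn * a + Sn*(F+1)"
  proof -
    have "(F+Sn)*i^2 \<le> (F+Sn)*(C3 + C4 * a^2)" using nn by (intro mult_left_mono[OF I2]) auto
    then show ?thesis by linarith
  qed
  also have "\<dots> = c0 + Gn * a + c2 * a^2" by (simp add: c0_def c2_def algebra_simps)
  finally have B': "bl * a^3 \<le> c0 + Gn * a + c2 * a^2" .
  have aa: "a \<le> max 1 ((c0 + Gn + c2) / bl)"
  proof (cases "a \<le> 1")
    case False
    then have a1: "a \<ge> 1" by simp
    have "c0 \<le> c0 * a^2" using c0 a1 by (simp add: mult_le_cancel_left1 one_le_power)
    moreover have "Gn * a \<le> Gn * a^2" using nn a1 by (intro mult_left_mono) (auto simp: power2_eq_square)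
    ultimately have "bl * a^3 \<le> (c0 + Gn + c2) * a^2" using B' by (simp add: algebra_simps)
    then have "(bl * a) * a^2 \<le> (c0 + Gn + c2) * a^2" by (simp add: power3_eq_cube power2_eq_square algebra_simps)
    then have "bl * a \<le> c0 + Gn + c2" using a1 by (simp add: mult_le_cancel_right)
    then have "a \<le> (c0 + Gn + c2) / bl" using bl by (simp add: field_simps)
    then show ?thesis by simp
  qed simp
  show ?thesis using aa I2 dd unfolding c0_def c2_def C3_def C4_def by simp
qed

lemma sgn_sqrt_meas[measurable]: "sgn_sqrt \<in> borel_measurable borel"
  unfolding sgn_sqrt_def by measurable

lemma sq32: "(\<bar>x::real\<bar> * \<bar>x\<bar>) powr (3/2) = \<bar>x\<bar> powr 3"
proof -
  have "(\<bar>x\<bar> * \<bar>x\<bar>) powr (3/2) = (\<bar>x\<bar> powr 2) powr (3/2)"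
    by (simp add: power2_eq_square)
  also have "\<dots> = \<bar>x\<bar> powr (2 * (3/2))" by (rule powr_powr)
  finally show ?thesis by simp
qed

lemma sgn_abs: "\<bar>sgn_sqrt s\<bar> = \<bar>s\<bar> powr (1/2)"
proof (cases "s = 0")
  case False
  then have "\<bar>s\<bar> / sqrt \<bar>s\<bar> = sqrt \<bar>s\<bar>" by (simp add: real_div_sqrt)
  then show ?thesis using False by (simp add: sgn_sqrt_def abs_div powr_half_sqrt)
qed (simp add: sgn_sqrt_def)

lemma sgn3: "\<bar>sgn_sqrt s\<bar> powr 3 = \<bar>s\<bar> powr (3/2)"
  by (simp add: sgn_abs powr_powr)

lemma sgnS: "sgn_sqrt s * s = \<bar>s\<bar> powr (3/2)"
proof (cases "s = 0")
  case False
  have "sgn_sqrt s * s = \<bar>sgn_sqrt s\<bar> * \<bar>s\<bar>"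
    using False by (auto simp: sgn_sqrt_def abs_mult abs_div divide_less_0_iff mult_less_0_iff
        zero_less_mult_iff zero_less_divide_iff)
  also have "\<dots> = \<bar>s\<bar> powr (1/2) * \<bar>s\<bar> powr 1" by (simp add: sgn_abs)
  also have "\<dots> = \<bar>s\<bar> powr (1/2 + 1)" by (rule powr_add[symmetric])
  also have "\<dots> = \<bar>s\<bar> powr (3/2)" by simp
  finally show ?thesis .
qed (simp add: sgn_sqrt_def)

lemma int_abs_le:
  fixes h g :: "'a \<Rightarrow> real"
  assumes hm: "h \<in> borel_measurable N" and gi: "integrable N g" and b: "AE x in N. \<bar>h x\<bar> \<le> g x"
  shows "integrable N h" "\<bar>integral\<^sup>L N h\<bar> \<le> integral\<^sup>L N g"
proof -
  show hi: "integrable N h"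
    by (rule Bochner_Integration.integrable_bound[OF gi hm]) (use b in \<open>auto elim!: eventually_mono\<close>)
  have "\<bar>integral\<^sup>L N h\<bar> \<le> (\<integral>x. \<bar>h x\<bar> \<partial>N)" by (rule integral_abs_bound)
  also have "\<dots> \<le> integral\<^sup>L N g" by (rule integral_mono_AE[OF integrable_abs[OF hi] gi b])
  finally show "\<bar>integral\<^sup>L N h\<bar> \<le> integral\<^sup>L N g" .
qed

lemma cube_root: "X \<ge> 0 \<Longrightarrow> (X powr (1/3)) ^ 3 = (X::real)"
  by (simp add: powr_powr flip: powr_realpow')

lemma sq_root23: "(X::real) \<ge> 0 \<Longrightarrow> X powr (2/3) = (X powr (1/3)) ^ 2"
  by (simp add: powr_powr flip: powr_realpow')

lemma sq_le_cube: "(t::real) \<ge> 0 \<Longrightarrow> t * t \<le> 1 + t powr 3"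
proof (cases "t \<le> 1")
  case True
  assume t: "t \<ge> 0"
  have "t * t \<le> 1 * 1" using True t by (intro mult_mono) auto
  moreover have "0 \<le> t powr 3" by simp
  ultimately show ?thesis by linarith
next
  case False
  assume t: "t \<ge> 0"
  have "t * t = t powr 2" using t by (simp add: power2_eq_square)
  also have "\<dots> \<le> t powr 3" using False by (intro powr_mono) auto
  finally show ?thesis by simp
qed

lemma lin_le_sq: assumes "(t::real) \<ge> 0" shows "t \<le> 1 + t * t"
proof -
  have "(t - 1)*(t - 1) = t*t - 2*t + 1" by (simp add: algebra_simps)
  moreover have "0 \<le> (t - 1)*(t - 1)" by simp
  ultimately have "0 \<le> t*t - 2*t + 1" by simp
  then show ?thesis using assms by linarith
qed

lemma eps_bounds:
  fixes \<Omega> :: "(real^'n::finite) set" and f Se :: "real^'n \<Rightarrow> real" and gS :: "real^'n \<Rightarrow> real^'n"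
    and \<alpha> \<beta> :: "real^'n \<Rightarrow> real" and M :: "real^'n \<Rightarrow> real^'n" and D S :: "real^'n \<Rightarrow> real"
    and e \<alpha>hi \<beta>lo \<beta>hi R :: real
  assumes \<Omega>o: "open \<Omega>" and R: "R > 0" and \<Omega>b: "\<Omega> \<subseteq> cball 0 R"
    and f: "Lp 3 \<Omega> f" and Se: "Lp (3/2) \<Omega> Se" and gS: "Lp (3/2) \<Omega> gS"
    and \<alpha>m: "\<alpha> \<in> borel_measurable (lebesgue_on \<Omega>)" and \<alpha>b: "AE x in lebesgue_on \<Omega>. 0 \<le> \<alpha> x \<and> \<alpha> x \<le> \<alpha>hi"
    and \<beta>m: "\<beta> \<in> borel_measurable (lebesgue_on \<Omega>)" and \<beta>b: "AE x in lebesgue_on \<Omega>. \<beta>lo \<le> \<beta> x \<and> \<beta> x \<le> \<beta>hi"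
    and \<beta>lo: "\<beta>lo > 0" and e: "e > 0" and \<alpha>hi: "\<alpha>hi \<ge> 0" and \<beta>hi: "\<beta>hi \<ge> 0"
    and M: "Lp 3 \<Omega> M" and D: "Lp 3 \<Omega> D" and wd: "weak_div \<Omega> M D" and S: "Lp (3/2) \<Omega> S"
    and eq1: "\<forall>v dv. Lp 3 \<Omega> v \<and> Lp 3 \<Omega> dv \<and> weak_div \<Omega> v dv \<longrightarrow>
          integral\<^sup>L (lebesgue_on \<Omega>) (\<lambda>x. (\<alpha> x + \<beta> x * norm (M x)) * (M x \<bullet> v x))
          + e * integral\<^sup>L (lebesgue_on \<Omega>) (\<lambda>x. \<bar>D x\<bar> * D x * dv x)
          - integral\<^sup>L (lebesgue_on \<Omega>) (\<lambda>x. dv x * S x)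
          = - bdry_pair \<Omega> Se gS v dv"
    and eq2: "\<forall>q. Lp (3/2) \<Omega> q \<longrightarrow>
          e * integral\<^sup>L (lebesgue_on \<Omega>) (\<lambda>x. sgn_sqrt (S x) * q x)
          + integral\<^sup>L (lebesgue_on \<Omega>) (\<lambda>x. D x * q x)
          = integral\<^sup>L (lebesgue_on \<Omega>) (\<lambda>x. f x * q x)"
  defines "a \<equiv> (\<integral>x. norm (M x) powr 3 \<partial>lebesgue_on \<Omega>) powr (1/3)"
    and "d \<equiv> (\<integral>x. \<bar>D x\<bar> powr 3 \<partial>lebesgue_on \<Omega>) powr (1/3)"
    and "i \<equiv> (\<integral>x. \<bar>S x\<bar> powr (3/2) \<partial>lebesgue_on \<Omega>) powr (1/3)"
    and "F \<equiv> (\<integral>x. \<bar>f x\<bar> powr 3 \<partial>lebesgue_on \<Omega>) powr (1/3)"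
    and "Gn \<equiv> (\<integral>x. norm (gS x) powr (3/2) \<partial>lebesgue_on \<Omega>) powr (2/3)"
    and "Sn \<equiv> (\<integral>x. \<bar>Se x\<bar> powr (3/2) \<partial>lebesgue_on \<Omega>) powr (2/3)"
    and "mu \<equiv> (\<integral>x. 1 \<partial>lebesgue_on \<Omega>)"
  shows "d \<le> F + e*i \<and> \<beta>lo * a^3 \<le> F*i^2 + Gn*a + Sn*d \<and>
         i^3 \<le> i*((2*R*(\<alpha>hi * mu powr (2/3) + Gn) + Sn) + (2*R*(\<alpha>hi+\<beta>hi))*a^2 + e*d^2)"
proof -
  let ?L = "lebesgue_on \<Omega>"
  have Mm[measurable]: "M \<in> borel_measurable ?L" and iM: "integrable ?L (\<lambda>x. norm (M x) powr 3)"
    using M by (auto simp: Lp_def)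
  have Dm[measurable]: "D \<in> borel_measurable ?L" and iD: "integrable ?L (\<lambda>x. \<bar>D x\<bar> powr 3)"
    using D by (auto simp: Lp_def)
  have Sm[measurable]: "S \<in> borel_measurable ?L" and iS: "integrable ?L (\<lambda>x. \<bar>S x\<bar> powr (3/2))"
    using S by (auto simp: Lp_def)
  have fm[measurable]: "f \<in> borel_measurable ?L" and iF: "integrable ?L (\<lambda>x. \<bar>f x\<bar> powr 3)"
    using f by (auto simp: Lp_def)
  have Sem[measurable]: "Se \<in> borel_measurable ?L" and iSe: "integrable ?L (\<lambda>x. \<bar>Se x\<bar> powr (3/2))"
    using Se by (auto simp: Lp_def)
  have gSm[measurable]: "gS \<in> borel_measurable ?L" and igS: "integrable ?L (\<lambda>x. norm (gS x) powr (3/2))"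
    using gS by (auto simp: Lp_def)
  note [measurable] = \<alpha>m \<beta>m
  define a3 where "a3 = (\<integral>x. norm (M x) powr 3 \<partial>?L)"
  define d3 where "d3 = (\<integral>x. \<bar>D x\<bar> powr 3 \<partial>?L)"
  define I where "I = (\<integral>x. \<bar>S x\<bar> powr (3/2) \<partial>?L)"
  have a30: "a3 \<ge> 0" "d3 \<ge> 0" "I \<ge> 0" unfolding a3_def d3_def I_def by auto
  have a3a: "a3 = a^3" "a3 powr (2/3) = a^2" using a30 unfolding a_def a3_def by (auto simp: cube_root sq_root23)
  have d3d: "d3 = d^3" "d3 powr (2/3) = d^2" using a30 unfolding d_def d3_def by (auto simp: cube_root sq_root23)
  have Ii: "I = i^3" "I powr (2/3) = i^2" using a30 unfolding i_def I_def by (auto simp: cube_root sq_root23)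
  have iI: "I powr (1/3) = i" unfolding i_def I_def ..
  have nn: "a \<ge> 0" "d \<ge> 0" "i \<ge> 0" "F \<ge> 0" "Gn \<ge> 0" "Sn \<ge> 0" "mu \<ge> 0"
    unfolding a_def d_def i_def F_def Gn_def Sn_def mu_def by auto
  define q where "q x = \<bar>D x\<bar> * D x" for x
  have qm[measurable]: "q \<in> borel_measurable ?L" unfolding q_def by measurable
  have q32: "\<bar>q x\<bar> powr (3/2) = \<bar>D x\<bar> powr 3" for x
    unfolding q_def abs_mult abs_abs by (rule sq32)
  have iq: "integrable ?L (\<lambda>x. \<bar>q x\<bar> powr (3/2))" unfolding q32 by (rule iD)
  have Lq: "Lp (3/2) \<Omega> q" unfolding Lp_def using iq by simp
  have iq_eq: "(\<integral>x. \<bar>q x\<bar> powr (3/2) \<partial>?L) = d3" unfolding q32 d3_def ..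
  define s where "s x = sgn_sqrt (S x)" for x
  have sm[measurable]: "s \<in> borel_measurable ?L" unfolding s_def by measurable
  have s3: "\<bar>s x\<bar> powr 3 = \<bar>S x\<bar> powr (3/2)" for x unfolding s_def by (rule sgn3)
  have is3: "integrable ?L (\<lambda>x. \<bar>s x\<bar> powr 3)" unfolding s3 by (rule iS)
  have is3_eq: "(\<integral>x. \<bar>s x\<bar> powr 3 \<partial>?L) = I" unfolding s3 I_def ..
  have Ls: "Lp 3 \<Omega> s" unfolding Lp_def using is3 by simp
  have nM: "\<bar>norm (M x)\<bar> powr 3 = norm (M x) powr 3" for x by simp
  have iMa: "integrable ?L (\<lambda>x. \<bar>norm (M x)\<bar> powr 3)" unfolding nM by (rule iM)
  have ngS: "\<bar>norm (gS x)\<bar> powr (3/2) = norm (gS x) powr (3/2)" for x by simp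
  have igSa: "integrable ?L (\<lambda>x. \<bar>norm (gS x)\<bar> powr (3/2))" unfolding ngS by (rule igS)
  have stepA: "d \<le> F + e*i"
  proof -
    have E: "e * (\<integral>x. s x * q x \<partial>?L) + (\<integral>x. D x * q x \<partial>?L) = (\<integral>x. f x * q x \<partial>?L)"
      using eq2 Lq unfolding s_def by blast
    have Dq: "(\<integral>x. D x * q x \<partial>?L) = d3"
    proof -
      have "D x * q x = \<bar>D x\<bar> powr 3" for x
        by (simp add: q_def power3_eq_cube abs_mult_self_eq algebra_simps)
      then show ?thesis by (simp add: d3_def)
    qed
    have h1: "(\<integral>x. \<bar>f x * q x\<bar> \<partial>?L) \<le> F * d^2"
      using holder3[OF fm qm iF iq] unfolding iq_eq d3d(2) F_def by simp
    have h2: "(\<integral>x. \<bar>s x * q x\<bar> \<partial>?L) \<le> i * d^2"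
      using holder3[OF sm qm is3 iq] unfolding iq_eq d3d(2) is3_eq iI by simp
    have "d3 = (\<integral>x. f x * q x \<partial>?L) - e * (\<integral>x. s x * q x \<partial>?L)" using E Dq by simp
    also have "\<dots> \<le> \<bar>\<integral>x. f x * q x \<partial>?L\<bar> + e * \<bar>\<integral>x. s x * q x \<partial>?L\<bar>"
    proof -
      have "e * (- (\<integral>x. s x * q x \<partial>?L)) \<le> e * \<bar>\<integral>x. s x * q x \<partial>?L\<bar>"
        using e by (intro mult_left_mono) auto
      moreover have "(\<integral>x. f x * q x \<partial>?L) \<le> \<bar>\<integral>x. f x * q x \<partial>?L\<bar>" by simp
      ultimately show ?thesis by simp
    qed
    also have "\<dots> \<le> F * d^2 + e * (i * d^2)"
    proof -
      have X: "\<bar>\<integral>x. f x * q x \<partial>?L\<bar> \<le> (\<integral>x. \<bar>f x * q x\<bar> \<partial>?L)" by (rule integral_abs_bound)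
      have Y: "\<bar>\<integral>x. s x * q x \<partial>?L\<bar> \<le> (\<integral>x. \<bar>s x * q x\<bar> \<partial>?L)" by (rule integral_abs_bound)
      have "e * \<bar>\<integral>x. s x * q x \<partial>?L\<bar> \<le> e * (i * d^2)"
      proof -
        have "\<bar>\<integral>x. s x * q x \<partial>?L\<bar> \<le> i * d^2" using Y h2 by linarith
        then show ?thesis using e by (intro mult_left_mono) auto
      qed
      then show ?thesis using h1 X by linarith
    qed
    finally have "d^3 \<le> (F + e*i) * d^2" using d3d by (simp add: algebra_simps)
    then have "d * d^2 \<le> (F + e*i) * d^2" by (simp add: power3_eq_cube power2_eq_square)
    then show ?thesis
    proof (cases "d = 0")
      case False
      then have "d^2 > 0" using nn by simp
      then show ?thesis using \<open>d * d^2 \<le> (F + e*i) * d^2\<close> by simp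
    qed (use nn e in simp)
  qed
  have \<Omega>bd: "bounded \<Omega>" using bounded_subset[OF bounded_cball \<Omega>b] .
  have fin: "finite_measure ?L" by (rule finite_measure_lebesgue_on[OF lmeasurable_open[OF \<Omega>bd \<Omega>o]])
  have ic: "integrable ?L (\<lambda>x. c)" for c :: real by (rule finite_measure.integrable_const[OF fin])
  have bdry_bd: "\<bar>bdry_pair \<Omega> Se gS v dv\<bar> \<le> (\<integral>x. norm (v x) powr 3 \<partial>?L) powr (1/3) * Gn + (\<integral>x. \<bar>dv x\<bar> powr 3 \<partial>?L) powr (1/3) * Sn"
    if vm: "v \<in> borel_measurable ?L" and iv: "integrable ?L (\<lambda>x. norm (v x) powr 3)"
      and dvm: "dv \<in> borel_measurable ?L" and idv: "integrable ?L (\<lambda>x. \<bar>dv x\<bar> powr 3)" for v dv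
  proof -
    have nvm: "(\<lambda>x. norm (v x)) \<in> borel_measurable ?L" using vm by measurable
    have ngm: "(\<lambda>x. norm (gS x)) \<in> borel_measurable ?L" by measurable
    have iva: "integrable ?L (\<lambda>x. \<bar>norm (v x)\<bar> powr 3)" using iv by simp
    have i1: "integrable ?L (\<lambda>x. norm (v x) * norm (gS x))" by (rule holder3_int[OF nvm ngm iva igSa])
    have i2: "integrable ?L (\<lambda>x. dv x * Se x)" by (rule holder3_int[OF dvm Sem idv iSe])
    have h1: "(\<integral>x. \<bar>norm (v x) * norm (gS x)\<bar> \<partial>?L) \<le> (\<integral>x. norm (v x) powr 3 \<partial>?L) powr (1/3) * Gn"
      using holder3[OF nvm ngm iva igSa] unfolding Gn_def by simp
    have h2: "(\<integral>x. \<bar>dv x * Se x\<bar> \<partial>?L) \<le> (\<integral>x. \<bar>dv x\<bar> powr 3 \<partial>?L) powr (1/3) * Sn"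
      using holder3[OF dvm Sem idv iSe] unfolding Sn_def by simp
    have "\<bar>bdry_pair \<Omega> Se gS v dv\<bar> \<le> (\<integral>x. \<bar>norm (v x) * norm (gS x)\<bar> + \<bar>dv x * Se x\<bar> \<partial>?L)"
      unfolding bdry_pair_def
    proof (rule int_abs_le(2))
      show "(\<lambda>x. v x \<bullet> gS x + dv x * Se x) \<in> borel_measurable ?L" using vm dvm by measurable
      show "integrable ?L (\<lambda>x. \<bar>norm (v x) * norm (gS x)\<bar> + \<bar>dv x * Se x\<bar>)"
        using integrable_abs[OF i1] integrable_abs[OF i2] by simp
      show "AE x in ?L. \<bar>v x \<bullet> gS x + dv x * Se x\<bar> \<le> \<bar>norm (v x) * norm (gS x)\<bar> + \<bar>dv x * Se x\<bar>"
      proof (rule AE_I2)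
        fix x
        have "\<bar>v x \<bullet> gS x\<bar> \<le> norm (v x) * norm (gS x)" by (rule Cauchy_Schwarz_ineq2)
        then show "\<bar>v x \<bullet> gS x + dv x * Se x\<bar> \<le> \<bar>norm (v x) * norm (gS x)\<bar> + \<bar>dv x * Se x\<bar>"
        proof -
          have "\<bar>v x \<bullet> gS x + dv x * Se x\<bar> \<le> \<bar>v x \<bullet> gS x\<bar> + \<bar>dv x * Se x\<bar>" by (rule abs_triangle_ineq)
          moreover have "\<bar>norm (v x) * norm (gS x)\<bar> = norm (v x) * norm (gS x)" by simp
          ultimately show ?thesis using \<open>\<bar>v x \<bullet> gS x\<bar> \<le> norm (v x) * norm (gS x)\<close> by linarith
        qed
      qed
    qed
    also have "\<dots> = (\<integral>x. \<bar>norm (v x) * norm (gS x)\<bar> \<partial>?L) + (\<integral>x. \<bar>dv x * Se x\<bar> \<partial>?L)"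
      using integrable_abs[OF i1] integrable_abs[OF i2] by (rule Bochner_Integration.integral_add)
    finally show ?thesis using h1 h2 by linarith
  qed
  have stepB: "\<beta>lo * a^3 \<le> F*i^2 + Gn*a + Sn*d"
  proof -
    have E1: "(\<integral>x. (\<alpha> x + \<beta> x * norm (M x)) * (M x \<bullet> M x) \<partial>?L) + e * (\<integral>x. \<bar>D x\<bar> * D x * D x \<partial>?L)
        - (\<integral>x. D x * S x \<partial>?L) = - bdry_pair \<Omega> Se gS M D"
      using eq1 M D wd by blast
    have E2: "e * (\<integral>x. s x * S x \<partial>?L) + (\<integral>x. D x * S x \<partial>?L) = (\<integral>x. f x * S x \<partial>?L)"
      using eq2 S unfolding s_def by blast
    have DDD: "(\<integral>x. \<bar>D x\<bar> * D x * D x \<partial>?L) = d3"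
    proof -
      have "\<bar>D x\<bar> * D x * D x = \<bar>D x\<bar> powr 3" for x
        by (simp add: power3_eq_cube abs_mult_self_eq algebra_simps)
      then show ?thesis by (simp add: d3_def)
    qed
    have sS: "(\<integral>x. s x * S x \<partial>?L) = I" unfolding s_def sgnS I_def ..
    have bd: "\<bar>bdry_pair \<Omega> Se gS M D\<bar> \<le> a * Gn + d * Sn"
      using bdry_bd[OF Mm iM Dm iD] unfolding a_def d_def .
    define hA where "hA x = (\<alpha> x + \<beta> x * norm (M x)) * (M x \<bullet> M x)" for x
    have hAm: "hA \<in> borel_measurable ?L" unfolding hA_def by measurable
    have hAi: "integrable ?L hA"
    proof (rule int_abs_le(1)[OF hAm])
      show "integrable ?L (\<lambda>x. \<alpha>hi * (1 + norm (M x) powr 3) + \<beta>hi * norm (M x) powr 3)"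
        using iM ic by auto
      show "AE x in ?L. \<bar>hA x\<bar> \<le> \<alpha>hi * (1 + norm (M x) powr 3) + \<beta>hi * norm (M x) powr 3"
        using \<alpha>b \<beta>b
      proof eventually_elim
        case (elim x)
        have n0: "norm (M x) \<ge> 0" by simp
        have MM: "M x \<bullet> M x = norm (M x) * norm (M x)" by (simp add: power2_norm_eq_inner[symmetric] power2_eq_square)
        have nn3: "norm (M x) powr 3 = norm (M x) * (norm (M x) * norm (M x))" by (simp add: power3_eq_cube)
        have pos: "0 \<le> \<alpha> x + \<beta> x * norm (M x)" using elim \<beta>lo by simp
        have "\<bar>hA x\<bar> = (\<alpha> x + \<beta> x * norm (M x)) * (norm (M x) * norm (M x))"
          using pos by (simp add: hA_def MM abs_mult)
        also have "\<dots> = \<alpha> x * (norm (M x) * norm (M x)) + \<beta> x * norm (M x) powr 3"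
          by (simp add: nn3 algebra_simps)
        also have "\<dots> \<le> \<alpha>hi * (1 + norm (M x) powr 3) + \<beta>hi * norm (M x) powr 3"
        proof -
          have "\<alpha> x * (norm (M x) * norm (M x)) \<le> \<alpha>hi * (norm (M x) * norm (M x))"
            using elim by (intro mult_right_mono) auto
          also have "\<dots> \<le> \<alpha>hi * (1 + norm (M x) powr 3)"
            using elim sq_le_cube[OF n0] by (intro mult_left_mono) auto
          finally have A: "\<alpha> x * (norm (M x) * norm (M x)) \<le> \<alpha>hi * (1 + norm (M x) powr 3)" .
          have B: "\<beta> x * norm (M x) powr 3 \<le> \<beta>hi * norm (M x) powr 3"
            using elim by (intro mult_right_mono) auto
          show ?thesis using A B by linarith
        qed
        finally show ?case .
      qed
    qed
    have lowA: "\<beta>lo * a3 \<le> (\<integral>x. hA x \<partial>?L)"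
    proof -
      have "\<beta>lo * a3 = (\<integral>x. \<beta>lo * norm (M x) powr 3 \<partial>?L)" by (simp add: a3_def)
      also have "\<dots> \<le> (\<integral>x. hA x \<partial>?L)"
      proof (rule integral_mono_AE)
        show "integrable ?L (\<lambda>x. \<beta>lo * norm (M x) powr 3)" using iM by simp
        show "integrable ?L hA" by (rule hAi)
        show "AE x in ?L. \<beta>lo * norm (M x) powr 3 \<le> hA x"
          using \<alpha>b \<beta>b
        proof eventually_elim
          case (elim x)
          have MM: "M x \<bullet> M x = norm (M x) * norm (M x)" by (simp add: power2_norm_eq_inner[symmetric] power2_eq_square)
          have nn3: "norm (M x) powr 3 = norm (M x) * (norm (M x) * norm (M x))" by (simp add: power3_eq_cube)
          have "\<beta>lo * norm (M x) powr 3 \<le> \<beta> x * norm (M x) powr 3"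
            using elim by (intro mult_right_mono) auto
          also have "\<dots> \<le> \<alpha> x * (norm (M x) * norm (M x)) + \<beta> x * norm (M x) powr 3"
            using elim by simp
          also have "\<dots> = hA x" by (simp add: hA_def MM nn3 algebra_simps)
          finally show ?case .
        qed
      qed
      finally show ?thesis .
    qed
    have fS: "(\<integral>x. f x * S x \<partial>?L) \<le> F * i^2"
    proof -
      have "(\<integral>x. f x * S x \<partial>?L) \<le> \<bar>\<integral>x. f x * S x \<partial>?L\<bar>" by simp
      also have "\<dots> \<le> (\<integral>x. \<bar>f x * S x\<bar> \<partial>?L)" by (rule integral_abs_bound)
      also have "\<dots> \<le> F * I powr (2/3)"
        using holder3[OF fm Sm iF iS] unfolding F_def I_def by simp
      finally show ?thesis using Ii(2) by simp
    qed
    have "(\<integral>x. hA x \<partial>?L) = (\<integral>x. f x * S x \<partial>?L) - e * I - e * d3 - bdry_pair \<Omega> Se gS M D"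
    proof -
      have E1': "(\<integral>x. hA x \<partial>?L) + e * d3 - (\<integral>x. D x * S x \<partial>?L) = - bdry_pair \<Omega> Se gS M D"
        using E1 unfolding DDD hA_def .
      have E2': "e * I + (\<integral>x. D x * S x \<partial>?L) = (\<integral>x. f x * S x \<partial>?L)"
        using E2 unfolding sS .
      show ?thesis using E1' E2' by linarith
    qed
    also have "\<dots> \<le> F * i^2 + (a * Gn + d * Sn)"
      using fS bd e a30 by (smt (verit) mult_nonneg_nonneg)
    finally have "\<beta>lo * a3 \<le> F * i^2 + (a * Gn + d * Sn)" using lowA by linarith
    then show ?thesis using a3a(1) by (simp add: algebra_simps)
  qed
  have stepC: "i^3 \<le> i*((2*R*(\<alpha>hi * mu powr (2/3) + Gn) + Sn) + (2*R*(\<alpha>hi+\<beta>hi))*a^2 + e*d^2)"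
  proof -
    obtain v dv where Lv: "Lp 3 \<Omega> v" and Ldv: "Lp 3 \<Omega> dv" and wdv: "weak_div \<Omega> v dv"
      and aes: "AE x in ?L. dv x = s x"
      and vb: "(\<integral>x. norm (v x) powr 3 \<partial>?L) \<le> (2*R) powr 3 * (\<integral>x. norm (s x) powr 3 \<partial>?L)"
      using div_inverse[OF \<Omega>o R \<Omega>b Ls] by blast
    have vm[measurable]: "v \<in> borel_measurable ?L" and iv: "integrable ?L (\<lambda>x. norm (v x) powr 3)"
      using Lv by (auto simp: Lp_def)
    have dvm[measurable]: "dv \<in> borel_measurable ?L" and idv: "integrable ?L (\<lambda>x. \<bar>dv x\<bar> powr 3)"
      using Ldv by (auto simp: Lp_def)
    have E: "(\<integral>x. (\<alpha> x + \<beta> x * norm (M x)) * (M x \<bullet> v x) \<partial>?L) + e * (\<integral>x. \<bar>D x\<bar> * D x * dv x \<partial>?L)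
        - (\<integral>x. dv x * S x \<partial>?L) = - bdry_pair \<Omega> Se gS v dv"
      using eq1 Lv Ldv wdv by blast
    have dvS: "(\<integral>x. dv x * S x \<partial>?L) = I"
    proof -
      have "(\<integral>x. dv x * S x \<partial>?L) = (\<integral>x. s x * S x \<partial>?L)"
        by (rule integral_cong_AE) (use aes in \<open>auto elim: eventually_mono\<close>)
      also have "\<dots> = I" unfolding s_def sgnS I_def ..
      finally show ?thesis .
    qed
    have idv_eq: "(\<integral>x. \<bar>dv x\<bar> powr 3 \<partial>?L) = I"
    proof -
      have "(\<integral>x. \<bar>dv x\<bar> powr 3 \<partial>?L) = (\<integral>x. \<bar>s x\<bar> powr 3 \<partial>?L)"
        by (rule integral_cong_AE) (use aes in \<open>auto elim: eventually_mono\<close>)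
      then show ?thesis using is3_eq by simp
    qed
    have di: "(\<integral>x. \<bar>dv x\<bar> powr 3 \<partial>?L) powr (1/3) = i" using idv_eq iI by simp
    define nv where "nv = (\<integral>x. norm (v x) powr 3 \<partial>?L) powr (1/3)"
    have nv0: "nv \<ge> 0" by (simp add: nv_def)
    have nvb: "nv \<le> 2*R*i"
    proof -
      have "(\<integral>x. norm (s x) powr 3 \<partial>?L) = I" using is3_eq by simp
      then have vb': "(\<integral>x. norm (v x) powr 3 \<partial>?L) \<le> (2*R) powr 3 * I" using vb by simp
      have "nv \<le> ((2*R) powr 3 * I) powr (1/3)" unfolding nv_def
        by (rule powr_mono2) (use vb' in auto)
      also have "\<dots> = ((2*R) powr 3) powr (1/3) * I powr (1/3)" using R a30 by (simp add: powr_mult)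
      also have "\<dots> = 2*R*i"
      proof -
        have "((2*R) powr 3) powr (1/3) = (2*R) powr (3*(1/3))" by (rule powr_powr)
        also have "\<dots> = 2*R" using R by simp
        finally show ?thesis using iI by simp
      qed
      finally show ?thesis .
    qed
    have bd: "\<bar>bdry_pair \<Omega> Se gS v dv\<bar> \<le> nv * Gn + i * Sn"
      using bdry_bd[OF vm iv dvm idv] unfolding nv_def di .
    have T2: "\<bar>\<integral>x. \<bar>D x\<bar> * D x * dv x \<partial>?L\<bar> \<le> i * d^2"
    proof -
      have "(\<lambda>x. \<bar>D x\<bar> * D x * dv x) = (\<lambda>x. dv x * q x)" by (auto simp: q_def)
      then have "\<bar>\<integral>x. \<bar>D x\<bar> * D x * dv x \<partial>?L\<bar> = \<bar>\<integral>x. dv x * q x \<partial>?L\<bar>" by simp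
      also have "\<dots> \<le> (\<integral>x. \<bar>dv x * q x\<bar> \<partial>?L)" by (rule integral_abs_bound)
      also have "\<dots> \<le> i * d^2"
        using holder3[OF dvm qm idv iq] unfolding iq_eq d3d(2) di .
      finally show ?thesis .
    qed
    have nvm: "(\<lambda>x. norm (v x)) \<in> borel_measurable ?L" by measurable
    have iva: "integrable ?L (\<lambda>x. \<bar>norm (v x)\<bar> powr 3)" using iv by simp
    have onem: "(\<lambda>x. 1::real) \<in> borel_measurable ?L" by simp
    have ione: "integrable ?L (\<lambda>x. \<bar>1::real\<bar> powr (3/2))" using ic by simp
    define M2 where "M2 x = norm (M x) * norm (M x)" for x
    have M2m: "M2 \<in> borel_measurable ?L" unfolding M2_def by measurable
    have M232: "\<bar>M2 x\<bar> powr (3/2) = norm (M x) powr 3" for x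
      using sq32[of "norm (M x)"] by (simp add: M2_def)
    have iM2: "integrable ?L (\<lambda>x. \<bar>M2 x\<bar> powr (3/2))" unfolding M232 by (rule iM)
    have i_v1: "integrable ?L (\<lambda>x. norm (v x) * 1)" by (rule holder3_int[OF nvm onem iva ione])
    have i_vM: "integrable ?L (\<lambda>x. norm (v x) * M2 x)" by (rule holder3_int[OF nvm M2m iva iM2])
    have h_v1: "(\<integral>x. norm (v x) * 1 \<partial>?L) \<le> nv * mu powr (2/3)"
      using holder3[OF nvm onem iva ione] unfolding nv_def mu_def by simp
    have h_vM: "(\<integral>x. norm (v x) * M2 x \<partial>?L) \<le> nv * a^2"
    proof -
      have "(\<integral>x. \<bar>norm (v x) * M2 x\<bar> \<partial>?L) \<le> nv * a3 powr (2/3)"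
        using holder3[OF nvm M2m iva iM2] unfolding M232 nv_def a3_def by simp
      moreover have "(\<lambda>x. \<bar>norm (v x) * M2 x\<bar>) = (\<lambda>x. norm (v x) * M2 x)" by (auto simp: M2_def)
      ultimately show ?thesis using a3a(2) by simp
    qed
    define hB where "hB x = (\<alpha> x + \<beta> x * norm (M x)) * (M x \<bullet> v x)" for x
    have hBm: "hB \<in> borel_measurable ?L" unfolding hB_def by measurable
    have T1: "\<bar>\<integral>x. hB x \<partial>?L\<bar> \<le> \<alpha>hi * (nv * mu powr (2/3)) + (\<alpha>hi + \<beta>hi) * (nv * a^2)"
    proof -
      have "\<bar>\<integral>x. hB x \<partial>?L\<bar> \<le> (\<integral>x. \<alpha>hi * (norm (v x) * 1) + (\<alpha>hi + \<beta>hi) * (norm (v x) * M2 x) \<partial>?L)"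
      proof (rule int_abs_le(2)[OF hBm])
        show "integrable ?L (\<lambda>x. \<alpha>hi * (norm (v x) * 1) + (\<alpha>hi + \<beta>hi) * (norm (v x) * M2 x))"
          using i_v1 i_vM by simp
        show "AE x in ?L. \<bar>hB x\<bar> \<le> \<alpha>hi * (norm (v x) * 1) + (\<alpha>hi + \<beta>hi) * (norm (v x) * M2 x)"
          using \<alpha>b \<beta>b
        proof eventually_elim
          case (elim x)
          have n0: "norm (M x) \<ge> 0" "norm (v x) \<ge> 0" by simp_all
          have pos: "0 \<le> \<alpha> x + \<beta> x * norm (M x)" using elim \<beta>lo by simp
          have cs: "\<bar>M x \<bullet> v x\<bar> \<le> norm (M x) * norm (v x)" by (rule Cauchy_Schwarz_ineq2)
          have "\<bar>hB x\<bar> = (\<alpha> x + \<beta> x * norm (M x)) * \<bar>M x \<bullet> v x\<bar>"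
            using pos by (simp add: hB_def abs_mult)
          also have "\<dots> \<le> (\<alpha> x + \<beta> x * norm (M x)) * (norm (M x) * norm (v x))"
            using pos cs by (rule mult_left_mono[rotated])
          also have "\<dots> \<le> (\<alpha>hi + \<beta>hi * norm (M x)) * (norm (M x) * norm (v x))"
          proof (rule mult_right_mono)
            have "\<beta> x * norm (M x) \<le> \<beta>hi * norm (M x)" using elim by (intro mult_right_mono) auto
            then show "\<alpha> x + \<beta> x * norm (M x) \<le> \<alpha>hi + \<beta>hi * norm (M x)" using elim by linarith
          qed simp
          also have "\<dots> = \<alpha>hi * (norm (M x) * norm (v x)) + \<beta>hi * (norm (v x) * M2 x)"
            by (simp add: M2_def algebra_simps)
          also have "\<dots> \<le> \<alpha>hi * (norm (v x) * 1) + (\<alpha>hi + \<beta>hi) * (norm (v x) * M2 x)"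
          proof -
            have ah: "\<alpha>hi \<ge> 0" using elim by linarith
            have "norm (M x) * norm (v x) \<le> (1 + M2 x) * norm (v x)"
              using lin_le_sq[OF n0(1)] by (intro mult_right_mono) (auto simp: M2_def)
            then have "\<alpha>hi * (norm (M x) * norm (v x)) \<le> \<alpha>hi * ((1 + M2 x) * norm (v x))"
              using ah by (intro mult_left_mono) auto
            then show ?thesis by (simp add: algebra_simps)
          qed
          finally show ?case .
        qed
      qed
      also have "\<dots> = \<alpha>hi * (\<integral>x. norm (v x) * 1 \<partial>?L) + (\<alpha>hi + \<beta>hi) * (\<integral>x. norm (v x) * M2 x \<partial>?L)"
        using i_v1 i_vM by simp
      also have "\<dots> \<le> \<alpha>hi * (nv * mu powr (2/3)) + (\<alpha>hi + \<beta>hi) * (nv * a^2)"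
      proof -
        have ah: "\<alpha>hi \<ge> 0" "\<alpha>hi + \<beta>hi \<ge> 0" using \<alpha>hi \<beta>hi by auto
        have "\<alpha>hi * (\<integral>x. norm (v x) * 1 \<partial>?L) \<le> \<alpha>hi * (nv * mu powr (2/3))"
          using ah h_v1 by (intro mult_left_mono) auto
        moreover have "(\<alpha>hi + \<beta>hi) * (\<integral>x. norm (v x) * M2 x \<partial>?L) \<le> (\<alpha>hi + \<beta>hi) * (nv * a^2)"
          using ah h_vM by (intro mult_left_mono) auto
        ultimately show ?thesis by linarith
      qed
      finally show ?thesis .
    qed
    have "I = (\<integral>x. hB x \<partial>?L) + e * (\<integral>x. \<bar>D x\<bar> * D x * dv x \<partial>?L) + bdry_pair \<Omega> Se gS v dv"
      using E dvS unfolding hB_def by linarith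
    also have "\<dots> \<le> \<alpha>hi * (nv * mu powr (2/3)) + (\<alpha>hi + \<beta>hi) * (nv * a^2) + e * (i * d^2) + (nv * Gn + i * Sn)"
    proof -
      have "e * (\<integral>x. \<bar>D x\<bar> * D x * dv x \<partial>?L) \<le> e * (i * d^2)"
        using T2 e by (intro mult_left_mono) auto
      then show ?thesis using T1 bd by linarith
    qed
    also have "\<dots> = nv * (\<alpha>hi * mu powr (2/3) + (\<alpha>hi + \<beta>hi) * a^2 + Gn) + i * (Sn + e * d^2)"
      by (simp add: algebra_simps)
    also have "\<dots> \<le> (2*R*i) * (\<alpha>hi * mu powr (2/3) + (\<alpha>hi + \<beta>hi) * a^2 + Gn) + i * (Sn + e * d^2)"
    proof -
      have "0 \<le> \<alpha>hi * mu powr (2/3) + (\<alpha>hi + \<beta>hi) * a^2 + Gn" using \<alpha>hi \<beta>hi nn by simp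
      then show ?thesis using nvb by (simp add: mult_right_mono)
    qed
    also have "\<dots> = i*((2*R*(\<alpha>hi * mu powr (2/3) + Gn) + Sn) + (2*R*(\<alpha>hi+\<beta>hi))*a^2 + e*d^2)"
      by (simp add: algebra_simps)
    finally show ?thesis using Ii(1) by simp
  qed
  show ?thesis using stepA stepB stepC by blast
qed

theorem proposition1p7:
  fixes \<Omega> :: "(real^'n) set"
    and f :: "real^'n \<Rightarrow> real"
    and Sext :: "real^'n \<Rightarrow> real" and gSext :: "real^'n \<Rightarrow> real^'n"
    and \<alpha> \<beta> :: "real^'n \<Rightarrow> real"
    and \<alpha>lo \<alpha>hi \<beta>lo \<beta>hi :: real
    and m :: "real \<Rightarrow> real^'n \<Rightarrow> real^'n"
    and dm :: "real \<Rightarrow> real^'n \<Rightarrow> real"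
    and S :: "real \<Rightarrow> real^'n \<Rightarrow> real"
  assumes dom: "open \<Omega>" "connected \<Omega>" "bounded \<Omega>" "\<Omega> \<noteq> {}"
    and reg: "unif_C1 \<Omega>"
    and f: "Lp 3 \<Omega> f"
    and Sb: "Lp (3/2) \<Omega> Sext" "Lp (3/2) \<Omega> gSext" "weak_grad \<Omega> Sext gSext"
    and \<alpha>: "\<alpha> \<in> borel_measurable (lebesgue_on \<Omega>)" "0 < \<alpha>lo" "\<alpha>lo \<le> \<alpha>hi"
           "AE x in lebesgue_on \<Omega>. \<alpha>lo \<le> \<alpha> x \<and> \<alpha> x \<le> \<alpha>hi"
    and \<beta>: "\<beta> \<in> borel_measurable (lebesgue_on \<Omega>)" "0 < \<beta>lo" "\<beta>lo \<le> \<beta>hi"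
           "AE x in lebesgue_on \<Omega>. \<beta>lo \<le> \<beta> x \<and> \<beta> x \<le> \<beta>hi"
    and sol: "\<And>\<epsilon>. 0 < \<epsilon> \<Longrightarrow>
       Lp 3 \<Omega> (m \<epsilon>) \<and> Lp 3 \<Omega> (dm \<epsilon>) \<and> weak_div \<Omega> (m \<epsilon>) (dm \<epsilon>) \<and> Lp (3/2) \<Omega> (S \<epsilon>) \<and>
       (\<forall>v dv. Lp 3 \<Omega> v \<and> Lp 3 \<Omega> dv \<and> weak_div \<Omega> v dv \<longrightarrow>
          integral\<^sup>L (lebesgue_on \<Omega>) (\<lambda>x. (\<alpha> x + \<beta> x * norm (m \<epsilon> x)) * (m \<epsilon> x \<bullet> v x))
          + \<epsilon> * integral\<^sup>L (lebesgue_on \<Omega>) (\<lambda>x. \<bar>dm \<epsilon> x\<bar> * dm \<epsilon> x * dv x)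
          - integral\<^sup>L (lebesgue_on \<Omega>) (\<lambda>x. dv x * S \<epsilon> x)
          = - bdry_pair \<Omega> Sext gSext v dv) \<and>
       (\<forall>q. Lp (3/2) \<Omega> q \<longrightarrow>
          \<epsilon> * integral\<^sup>L (lebesgue_on \<Omega>) (\<lambda>x. sgn_sqrt (S \<epsilon> x) * q x)
          + integral\<^sup>L (lebesgue_on \<Omega>) (\<lambda>x. dm \<epsilon> x * q x)
          = integral\<^sup>L (lebesgue_on \<Omega>) (\<lambda>x. f x * q x))"
  shows "\<exists>Km KS \<epsilon>0. 0 < \<epsilon>0 \<and> (\<forall>\<epsilon>. 0 < \<epsilon> \<and> \<epsilon> < \<epsilon>0 \<longrightarrow>
           V_norm \<Omega> (m \<epsilon>) (dm \<epsilon>) \<le> Km \<and> Lp_norm (3/2) \<Omega> (S \<epsilon>) \<le> KS)"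
proof -
  let ?L = "lebesgue_on \<Omega>"
  obtain R where R: "R > 0" and Rb: "\<And>x. x \<in> \<Omega> \<Longrightarrow> norm x \<le> R"
    using bounded_pos[of \<Omega>] dom(3) by blast
  have \<Omega>b: "\<Omega> \<subseteq> cball 0 R" using Rb by (auto simp: dist_norm)
  define F where "F = (\<integral>x. \<bar>f x\<bar> powr 3 \<partial>?L) powr (1/3)"
  define Gn where "Gn = (\<integral>x. norm (gSext x) powr (3/2) \<partial>?L) powr (2/3)"
  define Sn where "Sn = (\<integral>x. \<bar>Sext x\<bar> powr (3/2) \<partial>?L) powr (2/3)"
  define mu :: real where "mu = (\<integral>x. 1 \<partial>?L)"
  define C1 where "C1 = 2*R*(\<alpha>hi * mu powr (2/3) + Gn) + Sn"
  define C2 where "C2 = 2*R*(\<alpha>hi+\<beta>hi)"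
  define A0 where "A0 = max 1 ((((F+Sn) * (2*(C1 + 2*F^2)) + Sn*(F+1)) + Gn + (F+Sn)*(2*C2)) / \<beta>lo)"
  define I2 where "I2 = 2*(C1 + 2*F^2) + 2*C2 * A0^2"
  have nn: "F \<ge> 0" "Gn \<ge> 0" "Sn \<ge> 0" "mu \<ge> 0"
    unfolding F_def Gn_def Sn_def mu_def by auto
  have ahi: "\<alpha>hi \<ge> 0" and bhi: "\<beta>hi \<ge> 0" using \<alpha>(2,3) \<beta>(2,3) by auto
  have C0: "C1 \<ge> 0" "C2 \<ge> 0" unfolding C1_def C2_def using nn R ahi bhi by auto
  have A00: "A0 \<ge> 0" unfolding A0_def by simp
  have \<alpha>b: "AE x in ?L. 0 \<le> \<alpha> x \<and> \<alpha> x \<le> \<alpha>hi"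
    using \<alpha>(4) by eventually_elim (use \<alpha>(2) in auto)
  show ?thesis
  proof (intro exI conjI allI impI)
    show "(0::real) < 1/2" by simp
    fix \<epsilon> :: real assume \<epsilon>: "0 < \<epsilon> \<and> \<epsilon> < 1/2"
    then have e0: "\<epsilon> > 0" and e1: "\<epsilon> \<le> 1/2" by auto
    note so = sol[OF e0]
    define a where "a = (\<integral>x. norm (m \<epsilon> x) powr 3 \<partial>?L) powr (1/3)"
    define d where "d = (\<integral>x. \<bar>dm \<epsilon> x\<bar> powr 3 \<partial>?L) powr (1/3)"
    define i where "i = (\<integral>x. \<bar>S \<epsilon> x\<bar> powr (3/2) \<partial>?L) powr (1/3)"
    have EB: "d \<le> F + \<epsilon>*i \<and> \<beta>lo * a^3 \<le> F*i^2 + Gn*a + Sn*d \<and>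
         i^3 \<le> i*(C1 + C2*a^2 + \<epsilon>*d^2)"
      using eps_bounds[OF dom(1) R \<Omega>b f Sb(1) Sb(2) \<alpha>(1) \<alpha>b \<beta>(1) \<beta>(4) \<beta>(2) e0 ahi bhi,
          of "m \<epsilon>" "dm \<epsilon>" "S \<epsilon>"] so
      unfolding a_def d_def i_def F_def Gn_def Sn_def mu_def C1_def C2_def by blast
    have nn2: "a \<ge> 0" "d \<ge> 0" "i \<ge> 0" unfolding a_def d_def i_def by auto
    have AM: "a \<le> A0 \<and> i^2 \<le> 2*(C1 + 2*F^2) + 2*C2 * a^2 \<and> d \<le> F + 1 + i^2"
      unfolding A0_def
      by (rule arith_main[OF nn2(1,2,3) nn(1,2,3) C0 \<beta>(2) e0 e1]) (use EB in auto)
    have aA: "a \<le> A0" using AM by blast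
    have "a^2 \<le> A0^2" using aA nn2 by (intro power_mono) auto
    then have iI2: "i^2 \<le> I2" using AM C0 unfolding I2_def by (smt (verit) mult_left_mono)
    have dD: "d \<le> F + 1 + I2" using AM iI2 by linarith
    have V: "V_norm \<Omega> (m \<epsilon>) (dm \<epsilon>) = (a^3 + d^3) powr (1/3)"
    proof -
      have "a^3 = (\<integral>x. norm (m \<epsilon> x) powr 3 \<partial>?L)" unfolding a_def by (rule cube_root) simp
      moreover have "d^3 = (\<integral>x. \<bar>dm \<epsilon> x\<bar> powr 3 \<partial>?L)" unfolding d_def by (rule cube_root) simp
      ultimately show ?thesis by (simp add: V_norm_def)
    qed
    have "(a^3 + d^3) powr (1/3) \<le> (A0^3 + (F + 1 + I2)^3) powr (1/3)"
    proof (rule powr_mono2)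
      have "a^3 \<le> A0^3" using aA nn2 by (intro power_mono) auto
      moreover have "d^3 \<le> (F + 1 + I2)^3" using dD nn2 by (intro power_mono) auto
      ultimately show "a^3 + d^3 \<le> A0^3 + (F + 1 + I2)^3" by simp
    qed (use nn2 in auto)
    then show "V_norm \<Omega> (m \<epsilon>) (dm \<epsilon>) \<le> (A0^3 + (F + 1 + I2)^3) powr (1/3)" using V by simp
    have "Lp_norm (3/2) \<Omega> (S \<epsilon>) = i^2"
    proof -
      have "Lp_norm (3/2) \<Omega> (S \<epsilon>) = (\<integral>x. \<bar>S \<epsilon> x\<bar> powr (3/2) \<partial>?L) powr (2/3)"
        by (simp add: Lp_norm_def)
      also have "\<dots> = i^2" unfolding i_def by (rule sq_root23) simp
      finally show ?thesis .
    qed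
    then show "Lp_norm (3/2) \<Omega> (S \<epsilon>) \<le> I2" using iI2 by simp
  qed
qed

end
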